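(* Consider the heteroscedastic linear model $y(i,k)=\tau_i+\mu+\mathbf g^T(k)\beta+\varepsilon(i,k)$ with treatments $i\in\{1,\ldots,v_1\}$, covariate indices $k\in\{1,\ldots,d\}$, known regressors $\mathbf g(k)\in\mathbb R^{v_2}$, uncorrelated mean-zero errors with $\mathrm{Var}(\varepsilon(i,k))=\sigma^2/\lambda_i$, $\lambda_i>0$ known. Let $\Phi$ be an eigenvalue-based information function. If there exists a $\Phi$-optimal design for $\mathbf A^T\theta$ in this model, then there exists a product design $w\otimes\alpha$ (i.e. a design with $\xi(i,k)=w_i\alpha_k$ for some probability vectors $w\in\mathbb R^{v_1}$, $\alpha\in\mathbb R^d$) that is $\Phi$-optimal for $\mathbf A^T\theta$.
   Context: Write $\theta=(\tau^T,\mu,\beta^T)^T$, $\mathbf f(i,k)=(\mathbf e_i^T,1,\mathbf g^T(k))^T$. A design $\xi$ is a nonnegative function on $\{1,\ldots,v_1\}\times\{1,\ldots,d\}$ summing to one, with moment matrix $\mathbf M(\xi)=\sum_{i,k}\xi(i,k)\lambda_i\mathbf f(i,k)\mathbf f^T(i,k)$. Let $\mathbf Q_1\in\mathbb R^{v_1\times s_1}$ have full column rank, satisfy $\mathbf Q_1^T\mathbf 1_{v_1}=\mathbf 0$ and have no zero row; let $\mathbf K\in\mathbb R^{v_2\times s_2}$ have full column rank; $\mathbf Q_2=(\mathbf 0_{s_2},\mathbf K^T)^T$, $\mathbf A=\mathrm{diag}(\mathbf Q_1,\mathbf Q_2)$. A design is feasible for $\mathbf A^T\theta$ if $\mathcal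 C(\mathbf A)\subseteq\mathcal C(\mathbf M(\xi))$; its information matrix is then $\mathbf N_{\mathbf A}(\xi)=(\mathbf A^T\mathbf M^-(\xi)\mathbf A)^{-1}$. A design is $\Phi$-optimal for $\mathbf A^T\theta$ if it is feasible and maximizes $\Phi(\mathbf N_{\mathbf A}(\xi))$ over all feasible designs. An information function is a positively homogeneous, concave, nonnegative, nonconstant, upper semicontinuous function on nonnegative definite $s\times s$ matrices ($s=s_1+s_2$); it is eigenvalue-based if it depends only on the eigenvalues of its argument. *)

theory Defs
  imports "Jordan_Normal_Form.Matrix" "Jordan_Normal_Form.Char_Poly"
begin

definition nnd :: "nat \<Rightarrow> real mat \<Rightarrow> bool" where
  "nnd s C \<longleftrightarrow> C \<in> carrier_mat s s \<and> transpose_mat C = C \<and>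
     (\<forall>x \<in> carrier_vec s. x \<bullet> (C *\<^sub>v x) \<ge> 0)"

definition information_function :: "nat \<Rightarrow> (real mat \<Rightarrow> real) \<Rightarrow> bool" where
  "information_function s \<Phi> \<longleftrightarrow>
     (\<forall>C c. nnd s C \<and> c > 0 \<longrightarrow> \<Phi> (c \<cdot>\<^sub>m C) = c * \<Phi> C) \<and>
     (\<forall>C D t. nnd s C \<and> nnd s D \<and> 0 \<le> t \<and> t \<le> 1 \<longrightarrow>
        \<Phi> ((1 - t) \<cdot>\<^sub>m C + t \<cdot>\<^sub>m D) \<ge> (1 - t) * \<Phi> C + t * \<Phi> D) \<and>
     (\<forall>C. nnd s C \<longrightarrow> \<Phi> C \<ge> 0) \<and>
     (\<exists>C D. nnd s C \<and> nnd s D \<and> \<Phi> C \<noteq> \<Phi> D) \<and>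
     (\<forall>C \<epsilon>. nnd s C \<and> \<epsilon> > 0 \<longrightarrow> (\<exists>\<delta>>0. \<forall>D. nnd s D \<and>
        (\<forall>a<s. \<forall>b<s. \<bar>D $$ (a,b) - C $$ (a,b)\<bar> < \<delta>) \<longrightarrow> \<Phi> D < \<Phi> C + \<epsilon>))"

text \<open>Eigenvalue-based: depends only on the eigenvalues (with algebraic multiplicities,
  i.e. root multiplicities in the characteristic polynomial).\<close>
definition eigenvalue_based :: "nat \<Rightarrow> (real mat \<Rightarrow> real) \<Rightarrow> bool" where
  "eigenvalue_based s \<Phi> \<longleftrightarrow>
     (\<forall>C D. nnd s C \<and> nnd s D \<and> (\<forall>a. order a (char_poly C) = order a (char_poly D))
        \<longrightarrow> \<Phi> C = \<Phi> D)"

definition full_col_rank :: "real mat \<Rightarrow> bool" where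
  "full_col_rank Q \<longleftrightarrow> (\<forall>x \<in> carrier_vec (dim_col Q). Q *\<^sub>v x = 0\<^sub>v (dim_row Q) \<longrightarrow> x = 0\<^sub>v (dim_col Q))"

definition colspace_sub :: "real mat \<Rightarrow> real mat \<Rightarrow> bool" where
  "colspace_sub A M \<longleftrightarrow> (\<forall>x \<in> carrier_vec (dim_col A). \<exists>y \<in> carrier_vec (dim_col M). A *\<^sub>v x = M *\<^sub>v y)"

text \<open>A generalized inverse M^- (any G with M G M = M; the information matrix does
  not depend on the choice for feasible designs).\<close>
definition ginv :: "real mat \<Rightarrow> real mat" where
  "ginv M = (SOME G. G \<in> carrier_mat (dim_col M) (dim_row M) \<and> M * G * M = M)"

definition minv :: "real mat \<Rightarrow> real mat" where
  "minv B = (SOME C. C \<in> carrier_mat (dim_row B) (dim_row B) \<and> B * C = 1\<^sub>m (dim_row B) \<and> C * B = 1\<^sub>m (dim_row B))"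

text \<open>Regression vector f(i,k) = (e_i, 1, g(k)); indices are 0-based: i < v1, k < d.\<close>
definition fvec :: "nat \<Rightarrow> (nat \<Rightarrow> real vec) \<Rightarrow> nat \<Rightarrow> nat \<Rightarrow> real vec" where
  "fvec v1 g i k = unit_vec v1 i @\<^sub>v vec 1 (\<lambda>_. 1) @\<^sub>v g k"

definition is_design :: "nat \<Rightarrow> nat \<Rightarrow> (nat \<Rightarrow> nat \<Rightarrow> real) \<Rightarrow> bool" where
  "is_design v1 d \<xi> \<longleftrightarrow> (\<forall>i<v1. \<forall>k<d. \<xi> i k \<ge> 0) \<and> (\<Sum>i<v1. \<Sum>k<d. \<xi> i k) = 1"

definition prob_vec :: "nat \<Rightarrow> (nat \<Rightarrow> real) \<Rightarrow> bool" where
  "prob_vec n w \<longleftrightarrow> (\<forall>i<n. w i \<ge> 0) \<and> (\<Sum>i<n. w i) = 1"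

definition moment_mat :: "nat \<Rightarrow> nat \<Rightarrow> nat \<Rightarrow> (nat \<Rightarrow> real) \<Rightarrow> (nat \<Rightarrow> real vec)
    \<Rightarrow> (nat \<Rightarrow> nat \<Rightarrow> real) \<Rightarrow> real mat" where
  "moment_mat v1 v2 d lam g \<xi> = mat (v1 + 1 + v2) (v1 + 1 + v2) (\<lambda>(a,b).
     \<Sum>i<v1. \<Sum>k<d. \<xi> i k * lam i * (fvec v1 g i k $ a) * (fvec v1 g i k $ b))"

definition feasible :: "nat \<Rightarrow> nat \<Rightarrow> nat \<Rightarrow> (nat \<Rightarrow> real) \<Rightarrow> (nat \<Rightarrow> real vec)
    \<Rightarrow> real mat \<Rightarrow> (nat \<Rightarrow> nat \<Rightarrow> real) \<Rightarrow> bool" where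
  "feasible v1 v2 d lam g A \<xi> \<longleftrightarrow> is_design v1 d \<xi> \<and> colspace_sub A (moment_mat v1 v2 d lam g \<xi>)"

definition info_mat :: "nat \<Rightarrow> nat \<Rightarrow> nat \<Rightarrow> (nat \<Rightarrow> real) \<Rightarrow> (nat \<Rightarrow> real vec)
    \<Rightarrow> real mat \<Rightarrow> (nat \<Rightarrow> nat \<Rightarrow> real) \<Rightarrow> real mat" where
  "info_mat v1 v2 d lam g A \<xi> = minv (transpose_mat A * ginv (moment_mat v1 v2 d lam g \<xi>) * A)"

definition phi_optimal :: "(real mat \<Rightarrow> real) \<Rightarrow> nat \<Rightarrow> nat \<Rightarrow> nat \<Rightarrow> (nat \<Rightarrow> real)
    \<Rightarrow> (nat \<Rightarrow> real vec) \<Rightarrow> real mat \<Rightarrow> (nat \<Rightarrow> nat \<Rightarrow> real) \<Rightarrow> bool" where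
  "phi_optimal \<Phi> v1 v2 d lam g A \<xi> \<longleftrightarrow> feasible v1 v2 d lam g A \<xi> \<and>
     (\<forall>\<eta>. feasible v1 v2 d lam g A \<eta> \<longrightarrow>
        \<Phi> (info_mat v1 v2 d lam g A \<eta>) \<le> \<Phi> (info_mat v1 v2 d lam g A \<xi>))"

end

theory Submission
  imports Defs "Jordan_Normal_Form.Determinant"
begin

lemma normal_eq:
  fixes c :: "nat \<Rightarrow> nat \<Rightarrow> real"
  shows "\<forall>v. \<exists>y. \<forall>j<m. (\<Sum>i<n. c j i * (v i - (\<Sum>l<m. c l i * y l))) = 0"
proof (induction m)
  case 0
  then show ?case by simp
next
  case (Suc m)
  show ?case
  proof
    fix v :: "nat \<Rightarrow> real"
    obtain y1 where y1: "\<forall>j<m. (\<Sum>i<n. c j i * (v i - (\<Sum>l<m. c l i * y1 l))) = 0"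
      using Suc by blast
    obtain y2 where y2: "\<forall>j<m. (\<Sum>i<n. c j i * (c m i - (\<Sum>l<m. c l i * y2 l))) = 0"
      using Suc by blast
    define r where "r i = v i - (\<Sum>l<m. c l i * y1 l)" for i
    define s where "s i = c m i - (\<Sum>l<m. c l i * y2 l)" for i
    define al where "al = (if (\<Sum>i<n. s i * s i) = 0 then 0 else (\<Sum>i<n. r i * s i) / (\<Sum>i<n. s i * s i))"
    define y where "y l = (if l < m then y1 l - al * y2 l else al)" for l
    have res: "v i - (\<Sum>l<Suc m. c l i * y l) = r i - al * s i" for i
    proof -
      have "(\<Sum>l<m. c l i * y l) = (\<Sum>l<m. c l i * y1 l) - al * (\<Sum>l<m. c l i * y2 l)"
        by (simp add: y_def sum_subtractf sum_distrib_left algebra_simps)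
      then show ?thesis by (simp add: r_def s_def y_def algebra_simps)
    qed
    have orth: "(\<Sum>i<n. c j i * (r i - al * s i)) = 0" if "j < m" for j
    proof -
      have "(\<Sum>i<n. c j i * (r i - al * s i)) = (\<Sum>i<n. c j i * r i) - al * (\<Sum>i<n. c j i * s i)"
        by (simp add: sum_subtractf sum_distrib_left algebra_simps)
      then show ?thesis using y1 y2 that by (simp add: r_def s_def)
    qed
    have key: "(\<Sum>i<n. s i * (r i - al * s i)) = 0"
    proof (cases "(\<Sum>i<n. s i * s i) = 0")
      case True
      then have "\<forall>i\<in>{..<n}. s i * s i = 0"
        by (subst sum_nonneg_eq_0_iff[symmetric]) auto
      then show ?thesis by simp
    next
      case False
      have "(\<Sum>i<n. s i * (r i - al * s i)) = (\<Sum>i<n. r i * s i) - al * (\<Sum>i<n. s i * s i)"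
        by (simp add: sum_subtractf sum_distrib_left algebra_simps)
      then show ?thesis using False by (simp add: al_def)
    qed
    have orthm: "(\<Sum>i<n. c m i * (r i - al * s i)) = 0"
    proof -
      have cm: "c m i = s i + (\<Sum>l<m. c l i * y2 l)" for i by (simp add: s_def)
      have "(\<Sum>i<n. c m i * (r i - al * s i)) = (\<Sum>i<n. s i * (r i - al * s i))
            + (\<Sum>i<n. (\<Sum>l<m. c l i * y2 l) * (r i - al * s i))"
        by (simp add: cm distrib_right sum.distrib)
      also have "(\<Sum>i<n. (\<Sum>l<m. c l i * y2 l) * (r i - al * s i)) =
          (\<Sum>l<m. y2 l * (\<Sum>i<n. c l i * (r i - al * s i)))"
        by (simp add: sum_distrib_left sum_distrib_right algebra_simps sum.swap[of _ "{..<n}"])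
      also have "\<dots> = 0" using orth by simp
      finally show ?thesis using key by simp
    qed
    show "\<exists>y. \<forall>j<Suc m. (\<Sum>i<n. c j i * (v i - (\<Sum>l<Suc m. c l i * y l))) = 0"
      apply (rule exI[of _ y])
      unfolding res using orth orthm by (auto simp: less_Suc_eq)
  qed
qed
lemma self_sprod_zero:
  fixes r :: "real vec"
  assumes r: "r \<in> carrier_vec n" and z: "r \<bullet> r = 0"
  shows "r = 0\<^sub>v n"
proof -
  have "(\<Sum>i\<in>{0..<n}. r $ i * r $ i) = 0" using z r by (simp add: scalar_prod_def)
  then have "\<forall>i\<in>{0..<n}. r $ i * r $ i = 0"
    by (subst sum_nonneg_eq_0_iff[symmetric]) auto
  then show ?thesis using r by (intro eq_vecI) auto
qed

lemma sym_entry: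
  assumes "transpose_mat M = M" "M \<in> carrier_mat n n" "i < n" "j < n"
  shows "M $$ (i,j) = M $$ (j,i)"
proof -
  have "transpose_mat M $$ (i,j) = M $$ (j,i)" using assms(2-4) by simp
  then show ?thesis using assms(1) by simp
qed

lemma mat_vec_index_sum:
  assumes "M \<in> carrier_mat n m" "y \<in> carrier_vec m" "i < n"
  shows "(M *\<^sub>v y) $ i = (\<Sum>l<m. M $$ (i,l) * y $ l)"
  using assms by (simp add: mult_mat_vec_def scalar_prod_def row_def atLeast0LessThan)

lemma range_lemma:
  fixes M :: "real mat"
  assumes M: "M \<in> carrier_mat n n" and sym: "transpose_mat M = M" and v: "v \<in> carrier_vec n"
    and ker: "\<forall>z\<in>carrier_vec n. M *\<^sub>v z = 0\<^sub>v n \<longrightarrow> v \<bullet> z = 0"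
  shows "\<exists>y\<in>carrier_vec n. M *\<^sub>v y = v"
proof -
  obtain y where y: "\<forall>j<n. (\<Sum>i<n. M $$ (i,j) * (v $ i - (\<Sum>l<n. M $$ (i,l) * y l))) = 0"
    using normal_eq[where m=n and n=n and c="\<lambda>l i. M $$ (i,l)"] by blast
  define yv where "yv = vec n y"
  have yv: "yv \<in> carrier_vec n" by (simp add: yv_def)
  define r where "r = v - M *\<^sub>v yv"
  have r: "r \<in> carrier_vec n" using M v yv unfolding r_def by (metis minus_carrier_vec mult_mat_vec_carrier)
  have ri: "r $ i = v $ i - (\<Sum>l<n. M $$ (i,l) * y l)" if "i < n" for i
  proof -
    have "r $ i = v $ i - (M *\<^sub>v yv) $ i" using that M v yv by (simp add: r_def)
    also have "(M *\<^sub>v yv) $ i = (\<Sum>l<n. M $$ (i,l) * yv $ l)" by (rule mat_vec_index_sum[OF M yv that])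
    also have "\<dots> = (\<Sum>l<n. M $$ (i,l) * y l)" by (intro sum.cong) (auto simp: yv_def)
    finally show ?thesis .
  qed
  have Mr: "M *\<^sub>v r = 0\<^sub>v n"
  proof (rule eq_vecI)
    fix j assume j: "j < dim_vec (0\<^sub>v n :: real vec)"
    have "(M *\<^sub>v r) $ j = (\<Sum>i<n. M $$ (j,i) * r $ i)" by (rule mat_vec_index_sum[OF M r]) (use j in simp)
    also have "\<dots> = (\<Sum>i<n. M $$ (i,j) * (v $ i - (\<Sum>l<n. M $$ (i,l) * y l)))"
      using j M sym by (intro sum.cong) (auto simp: ri sym_entry[OF sym M])
    also have "\<dots> = 0" using y j by simp
    finally show "(M *\<^sub>v r) $ j = 0\<^sub>v n $ j" using j by simp
  qed (use M in simp)
  have vr: "v \<bullet> r = 0" using ker r Mr by blast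
  have "(M *\<^sub>v yv) \<bullet> r = yv \<bullet> (M *\<^sub>v r)"
    using transpose_vec_mult_scalar[OF M r yv] sym by simp
  then have Myr: "(M *\<^sub>v yv) \<bullet> r = 0" using Mr yv by simp
  have Myv: "M *\<^sub>v yv \<in> carrier_vec n" using M yv by simp
  have "r \<bullet> r = v \<bullet> r - (M *\<^sub>v yv) \<bullet> r"
    using minus_scalar_prod_distrib[OF v Myv r] by (simp add: r_def[symmetric])
  then have "r \<bullet> r = 0" using vr Myr by simp
  then have r0: "r = 0\<^sub>v n" using self_sprod_zero r by blast
  have "M *\<^sub>v yv = v"
  proof (rule eq_vecI)
    fix i assume i: "i < dim_vec v"
    then have "r $ i = 0" using r0 v by simp
    moreover have "(v - M *\<^sub>v yv) $ i = v$i - (M *\<^sub>v yv)$i"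
      using i v Myv M by (intro index_minus_vec(1)) auto
    ultimately show "(M *\<^sub>v yv) $ i = v $ i" by (simp add: r_def)
  qed (use v Myv M in simp)
  then show ?thesis using yv by blast
qed
lemma minus_zero_eq:
  fixes a :: "real vec"
  assumes a: "a \<in> carrier_vec n" and b: "b \<in> carrier_vec n" and z: "a - b = 0\<^sub>v n"
  shows "a = b"
proof (rule eq_vecI)
  fix i assume i: "i < dim_vec b"
  have "(a - b) $ i = a $ i - b $ i" using i a b by (intro index_minus_vec(1)) auto
  then show "a $ i = b $ i" using z i b by simp
qed (use a b in simp)

lemma mat_unit_col:
  fixes M :: "real mat"
  assumes M: "M \<in> carrier_mat n m" and b: "b < m"
  shows "M *\<^sub>v unit_vec m b = col M b"
proof (rule eq_vecI)
  fix i assume i: "i < dim_vec (col M b)"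
  have "row M i \<bullet> unit_vec m b = row M i $ b"
    by (rule scalar_prod_right_unit[OF b])
  then show "(M *\<^sub>v unit_vec m b) $ i = col M b $ i" using i M b by simp
qed (use M in simp)

lemma sym_ker_range0:
  fixes M :: "real mat"
  assumes M: "M \<in> carrier_mat n n" and sym: "transpose_mat M = M"
    and w: "w \<in> carrier_vec n" and z: "M *\<^sub>v (M *\<^sub>v w) = 0\<^sub>v n"
  shows "M *\<^sub>v w = 0\<^sub>v n"
proof -
  have Mw: "M *\<^sub>v w \<in> carrier_vec n" using M w by simp
  have "(transpose_mat M *\<^sub>v w) \<bullet> (M *\<^sub>v w) = w \<bullet> (M *\<^sub>v (M *\<^sub>v w))"
    by (rule transpose_vec_mult_scalar[OF M Mw w])
  then have "(M *\<^sub>v w) \<bullet> (M *\<^sub>v w) = 0" using sym z w by simp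
  then show ?thesis using self_sprod_zero Mw by blast
qed

lemma col_carrier:
  assumes "M \<in> carrier_mat n m"
  shows "col M b \<in> carrier_vec n"
  by (rule carrier_vecI) (use assms in simp)

lemma ginv_exists:
  fixes M :: "real mat"
  assumes M: "M \<in> carrier_mat n n" and sym: "transpose_mat M = M"
  shows "\<exists>G. G \<in> carrier_mat n n \<and> M * G * M = M"
proof -
  have MM: "M * M \<in> carrier_mat n n" using M by simp
  have symMM: "transpose_mat (M * M) = M * M" using transpose_mult[OF M M] sym by simp
  have ex: "\<exists>y. b < n \<longrightarrow> y \<in> carrier_vec n \<and> (M * M) *\<^sub>v y = col M b" for b
  proof (cases "b < n")
    case True
    have cM: "col M b \<in> carrier_vec n" using col_carrier[OF M] .
    have "\<exists>y\<in>carrier_vec n. (M * M) *\<^sub>v y = col M b"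
    proof (rule range_lemma[OF MM symMM cM], intro ballI impI)
      fix z :: "real vec" assume z: "z \<in> carrier_vec n" and z0: "M * M *\<^sub>v z = 0\<^sub>v n"
      have "M *\<^sub>v (M *\<^sub>v z) = 0\<^sub>v n" using z0 assoc_mult_mat_vec[OF M M z] by simp
      then have Mz: "M *\<^sub>v z = 0\<^sub>v n" using sym_ker_range0[OF M sym z] by simp
      have "col M b = row M b" using col_transpose[of b M] True M sym by simp
      then have "col M b \<bullet> z = (M *\<^sub>v z) $ b" using True M by simp
      then show "col M b \<bullet> z = 0" using Mz True by simp
    qed
    then show ?thesis by blast
  qed simp
  obtain yf where yf0: "\<forall>b. b < n \<longrightarrow> yf b \<in> carrier_vec n \<and> (M * M) *\<^sub>v yf b = col M b"
    using choice[of "\<lambda>b y. b < n \<longrightarrow> y \<in> carrier_vec n \<and> (M * M) *\<^sub>v y = col M b"] ex by blast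
  then have yf: "\<And>b. b < n \<Longrightarrow> yf b \<in> carrier_vec n \<and> (M * M) *\<^sub>v yf b = col M b" by blast
  define Y where "Y = mat n n (\<lambda>(i,b). yf b $ i)"
  have Y: "Y \<in> carrier_mat n n" by (simp add: Y_def)
  have colY: "col Y b = yf b" if "b < n" for b
    using yf[OF that] that by (auto simp: Y_def col_mat)
  have MMY: "M * M * Y = M"
  proof (rule mat_col_eqI)
    fix b assume "b < dim_col M"
    then have b: "b < n" using M by simp
    have "col (M * M * Y) b = (M * M) *\<^sub>v col Y b" using col_mult2[OF MM Y b] .
    then show "col (M * M * Y) b = col M b" using colY[OF b] yf[OF b] by simp
  qed (use M Y in auto)
  have "M * Y * M = M"
  proof (rule mat_col_eqI)
    fix b assume "b < dim_col M"
    then have b: "b < n" using M by simp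
    define c where "c = col M b"
    have c: "c \<in> carrier_vec n" using col_carrier[OF M] by (simp add: c_def)
    have Yc: "Y *\<^sub>v c \<in> carrier_vec n" using Y c by simp
    have ub: "unit_vec n b \<in> carrier_vec n" by simp
    have c_eq: "c = M *\<^sub>v unit_vec n b" using mat_unit_col[OF M b] by (simp add: c_def)
    have col1: "col (M * Y * M) b = M *\<^sub>v (Y *\<^sub>v c)"
      using col_mult2[of "M * Y" n n M n b] M Y b assoc_mult_mat_vec[OF M Y c] by (simp add: c_def)
    define w where "w = Y *\<^sub>v c - unit_vec n b"
    have w: "w \<in> carrier_vec n" using Yc by (simp add: w_def)
    define d where "d = M *\<^sub>v w"
    have d: "d \<in> carrier_vec n" using M w by (simp add: d_def)
    have d_eq: "d = M *\<^sub>v (Y *\<^sub>v c) - c"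
      unfolding d_def w_def c_eq[symmetric] using mult_minus_distrib_mat_vec[OF M Yc ub]
      by (simp add: c_eq[symmetric])
    have "M *\<^sub>v (M *\<^sub>v (Y *\<^sub>v c)) = (M * M * Y) *\<^sub>v c"
      using assoc_mult_mat_vec[OF M M Yc] assoc_mult_mat_vec[OF MM Y c] by simp
    then have "M *\<^sub>v (M *\<^sub>v (Y *\<^sub>v c)) = M *\<^sub>v c" using MMY by simp
    then have Md: "M *\<^sub>v d = 0\<^sub>v n"
      unfolding d_eq using mult_minus_distrib_mat_vec[of M n n "M *\<^sub>v (Y *\<^sub>v c)" c] M Yc c
      by (simp add: minus_cancel_vec)
    have "(transpose_mat M *\<^sub>v w) \<bullet> d = w \<bullet> (M *\<^sub>v d)"
      by (rule transpose_vec_mult_scalar[OF M d w])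
    then have "d \<bullet> d = 0" using sym Md w by (simp add: d_def)
    then have "d = 0\<^sub>v n" using self_sprod_zero d by blast
    then have "M *\<^sub>v (Y *\<^sub>v c) = c"
      using d_eq M Yc c minus_zero_eq[of "M *\<^sub>v (Y *\<^sub>v c)" n c] by simp
    then show "col (M * Y * M) b = col M b" using col1 by (simp add: c_def)
  qed (use M Y in auto)
  then show ?thesis using Y by blast
qed

lemma ginv_prop:
  fixes M :: "real mat"
  assumes M: "M \<in> carrier_mat n n" and sym: "transpose_mat M = M"
  shows "ginv M \<in> carrier_mat n n" "M * ginv M * M = M"
proof -
  obtain G where G: "G \<in> carrier_mat n n" "M * G * M = M" using ginv_exists[OF M sym] by blast
  have "ginv M \<in> carrier_mat (dim_col M) (dim_row M) \<and> M * ginv M * M = M"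
    unfolding ginv_def
  proof (rule someI[of _ G])
    show "G \<in> carrier_mat (dim_col M) (dim_row M) \<and> M * G * M = M" using G M by simp
  qed
  then show "ginv M \<in> carrier_mat n n" "M * ginv M * M = M" using M by auto
qed
lemma colspace_matrix:
  fixes A M :: "real mat"
  assumes M: "M \<in> carrier_mat n n" and A: "A \<in> carrier_mat n s" and cs: "colspace_sub A M"
  shows "\<exists>Z. Z \<in> carrier_mat n s \<and> A = M * Z"
proof -
  have ex: "\<exists>y. j < s \<longrightarrow> y \<in> carrier_vec n \<and> A *\<^sub>v unit_vec s j = M *\<^sub>v y" for j
  proof -
    have "unit_vec s j \<in> carrier_vec (dim_col A)" using A by simp
    then have "\<exists>y\<in>carrier_vec (dim_col M). A *\<^sub>v unit_vec s j = M *\<^sub>v y"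
      using cs unfolding colspace_sub_def by blast
    then show ?thesis using M by auto
  qed
  obtain zf where zf0: "\<forall>j. j < s \<longrightarrow> zf j \<in> carrier_vec n \<and> A *\<^sub>v unit_vec s j = M *\<^sub>v zf j"
    using choice[of "\<lambda>j y. j < s \<longrightarrow> y \<in> carrier_vec n \<and> A *\<^sub>v unit_vec s j = M *\<^sub>v y"] ex by blast
  define Z where "Z = mat n s (\<lambda>(i,j). zf j $ i)"
  have Z: "Z \<in> carrier_mat n s" by (simp add: Z_def)
  have colZ: "col Z j = zf j" if "j < s" for j
  proof -
    have "zf j \<in> carrier_vec n" using zf0 that by blast
    then show ?thesis using that by (auto simp: Z_def col_mat)
  qed
  have "M * Z = A"
  proof (rule mat_col_eqI)
    fix j assume "j < dim_col A"
    then have j: "j < s" using A by simp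
    have "col (M * Z) j = M *\<^sub>v col Z j" using col_mult2[OF M Z j] .
    also have "\<dots> = A *\<^sub>v unit_vec s j" using colZ[OF j] zf0 j by simp
    also have "\<dots> = col A j" using mat_unit_col[OF A j] .
    finally show "col (M * Z) j = col A j" .
  qed (use M Z A in auto)
  then show ?thesis using Z by auto
qed

lemma minv_prop:
  fixes B :: "real mat"
  assumes B: "B \<in> carrier_mat s s" and inj: "\<forall>z\<in>carrier_vec s. B *\<^sub>v z = 0\<^sub>v s \<longrightarrow> z = 0\<^sub>v s"
  shows "minv B \<in> carrier_mat s s" "B * minv B = 1\<^sub>m s" "minv B * B = 1\<^sub>m s"
proof -
  have "det B \<noteq> 0" using det_0_iff_vec_prod_zero[OF B] inj by auto
  from det_non_zero_imp_unit[OF B this]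
  obtain C where C: "C \<in> carrier_mat s s" "C * B = 1\<^sub>m s" "B * C = 1\<^sub>m s"
    unfolding Units_def ring_mat_def by auto
  have "minv B \<in> carrier_mat (dim_row B) (dim_row B) \<and> B * minv B = 1\<^sub>m (dim_row B) \<and> minv B * B = 1\<^sub>m (dim_row B)"
    unfolding minv_def
  proof (rule someI[of _ C])
    show "C \<in> carrier_mat (dim_row B) (dim_row B) \<and> B * C = 1\<^sub>m (dim_row B) \<and> C * B = 1\<^sub>m (dim_row B)"
      using C B by simp
  qed
  then show "minv B \<in> carrier_mat s s" "B * minv B = 1\<^sub>m s" "minv B * B = 1\<^sub>m s" using B by auto
qed
lemma info_facts:
  fixes M A :: "real mat"
  assumes M: "M \<in> carrier_mat n n" and sym: "transpose_mat M = M"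
    and psd: "\<forall>u\<in>carrier_vec n. u \<bullet> (M *\<^sub>v u) \<ge> 0"
    and ker: "\<forall>u\<in>carrier_vec n. u \<bullet> (M *\<^sub>v u) = 0 \<longrightarrow> M *\<^sub>v u = 0\<^sub>v n"
    and A: "A \<in> carrier_mat n s" and rk: "full_col_rank A" and cs: "colspace_sub A M"
  defines "N \<equiv> minv (transpose_mat A * ginv M * A)"
  shows "N \<in> carrier_mat s s" "transpose_mat N = N"
    "\<And>x. x \<in> carrier_vec s \<Longrightarrow> \<exists>u\<in>carrier_vec n. transpose_mat A *\<^sub>v u = x \<and> u \<bullet> (M *\<^sub>v u) = x \<bullet> (N *\<^sub>v x)"
    "\<And>x u. x \<in> carrier_vec s \<Longrightarrow> u \<in> carrier_vec n \<Longrightarrow> transpose_mat A *\<^sub>v u = x \<Longrightarrow> x \<bullet> (N *\<^sub>v x) \<le> u \<bullet> (M *\<^sub>v u)"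
proof -
  obtain Z where Z: "Z \<in> carrier_mat n s" and AMZ: "A = M * Z" using colspace_matrix[OF M A cs] by blast
  define G where "G = ginv M"
  have G: "G \<in> carrier_mat n n" and MGM: "M * G * M = M" using ginv_prop[OF M sym] by (auto simp: G_def)
  have ZT: "transpose_mat Z \<in> carrier_mat s n" using Z by simp
  have MZ: "M * Z \<in> carrier_mat n s" using M Z by simp
  have AT: "transpose_mat A = transpose_mat Z * M"
    using AMZ transpose_mult[OF M Z] sym by simp
  define B where "B = transpose_mat A * G * A"
  have MG: "M * G \<in> carrier_mat n n" using M G by simp
  have B_eq: "B = transpose_mat Z * (M * Z)"
  proof -
    have "B = transpose_mat Z * M * G * (M * Z)" unfolding B_def AT by (simp add: AMZ)
    also have "transpose_mat Z * M * G = transpose_mat Z * (M * G)" by (rule assoc_mult_mat[OF ZT M G])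
    also have "transpose_mat Z * (M * G) * (M * Z) = transpose_mat Z * ((M * G) * (M * Z))"
      by (rule assoc_mult_mat[OF ZT MG MZ])
    also have "(M * G) * (M * Z) = ((M * G) * M) * Z" by (rule assoc_mult_mat[OF MG M Z, symmetric])
    also have "(M * G) * M = M" by (rule MGM)
    finally show ?thesis .
  qed
  have B: "B \<in> carrier_mat s s" using B_eq Z M by simp
  have Bv: "B *\<^sub>v z = transpose_mat Z *\<^sub>v (M *\<^sub>v (Z *\<^sub>v z))" if z: "z \<in> carrier_vec s" for z
    unfolding B_eq using assoc_mult_mat_vec[OF ZT MZ z] assoc_mult_mat_vec[OF M Z z] by simp
  have ATv: "transpose_mat A *\<^sub>v u = transpose_mat Z *\<^sub>v (M *\<^sub>v u)" if u: "u \<in> carrier_vec n" for u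
    unfolding AT using assoc_mult_mat_vec[OF ZT M u] .
  have zBz: "z \<bullet> (B *\<^sub>v z) = (Z *\<^sub>v z) \<bullet> (M *\<^sub>v (Z *\<^sub>v z))" if z: "z \<in> carrier_vec s" for z
  proof -
    have Zz: "Z *\<^sub>v z \<in> carrier_vec n" using Z z by simp
    have MZz: "M *\<^sub>v (Z *\<^sub>v z) \<in> carrier_vec n" using M Zz by simp
    have "z \<bullet> (B *\<^sub>v z) = (transpose_mat Z *\<^sub>v (M *\<^sub>v (Z *\<^sub>v z))) \<bullet> z"
      using Bv[OF z] comm_scalar_prod[of z s] z ZT MZz by simp
    also have "\<dots> = (M *\<^sub>v (Z *\<^sub>v z)) \<bullet> (Z *\<^sub>v z)" using transpose_vec_mult_scalar[OF Z z MZz] .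
    also have "\<dots> = (Z *\<^sub>v z) \<bullet> (M *\<^sub>v (Z *\<^sub>v z))" using comm_scalar_prod[OF MZz Zz] .
    finally show ?thesis .
  qed
  have inj: "\<forall>z\<in>carrier_vec s. B *\<^sub>v z = 0\<^sub>v s \<longrightarrow> z = 0\<^sub>v s"
  proof (intro ballI impI)
    fix z :: "real vec" assume z: "z \<in> carrier_vec s" and Bz: "B *\<^sub>v z = 0\<^sub>v s"
    have Zz: "Z *\<^sub>v z \<in> carrier_vec n" using Z z by simp
    have "(Z *\<^sub>v z) \<bullet> (M *\<^sub>v (Z *\<^sub>v z)) = 0" using zBz[OF z] Bz z by simp
    then have "M *\<^sub>v (Z *\<^sub>v z) = 0\<^sub>v n" using ker Zz by blast
    then have "A *\<^sub>v z = 0\<^sub>v n" using AMZ assoc_mult_mat_vec[OF M Z z] by simp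
    then show "z = 0\<^sub>v s" using rk z A unfolding full_col_rank_def by auto
  qed
  have NB: "N = minv B" by (simp add: N_def B_def G_def)
  have N: "N \<in> carrier_mat s s" and BN: "B * N = 1\<^sub>m s" and NB1: "N * B = 1\<^sub>m s"
    using minv_prop[OF B inj] NB by auto
  show "N \<in> carrier_mat s s" by (rule N)
  have BT: "transpose_mat B = B"
    unfolding B_eq using transpose_mult[OF ZT MZ] transpose_mult[OF M Z] sym ZT M Z
    by (simp add: assoc_mult_mat[OF ZT M Z])
  have NTB: "transpose_mat N * B = 1\<^sub>m s"
  proof -
    have "transpose_mat (B * N) = transpose_mat N * transpose_mat B" using transpose_mult[OF B N] .
    then show ?thesis using BN BT by simp
  qed
  have NT: "transpose_mat N \<in> carrier_mat s s" using N by simp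
  have "transpose_mat N = transpose_mat N * (B * N)" using BN NT by simp
  also have "\<dots> = (transpose_mat N * B) * N" using assoc_mult_mat[OF NT B N] by simp
  also have "\<dots> = N" using NTB N by simp
  finally show NsymT: "transpose_mat N = N" .
  have main: "(\<exists>u\<in>carrier_vec n. transpose_mat A *\<^sub>v u = x \<and> u \<bullet> (M *\<^sub>v u) = x \<bullet> (N *\<^sub>v x))
     \<and> (\<forall>u\<in>carrier_vec n. transpose_mat A *\<^sub>v u = x \<longrightarrow> x \<bullet> (N *\<^sub>v x) \<le> u \<bullet> (M *\<^sub>v u))"
    if x: "x \<in> carrier_vec s" for x
  proof -
  define z where "z = N *\<^sub>v x"
  have z: "z \<in> carrier_vec s" using N x by (simp add: z_def)
  have Bz: "B *\<^sub>v z = x" unfolding z_def using assoc_mult_mat_vec[OF B N x] BN x by simp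
  define u0 where "u0 = Z *\<^sub>v z"
  have u0: "u0 \<in> carrier_vec n" using Z z by (simp add: u0_def)
  have ATu0: "transpose_mat A *\<^sub>v u0 = x" using ATv[OF u0] Bv[OF z] Bz by (simp add: u0_def)
  have xz: "x \<bullet> (N *\<^sub>v x) = z \<bullet> x" using comm_scalar_prod[OF x z] by (simp add: z_def)
  have u0Mu0: "u0 \<bullet> (M *\<^sub>v u0) = x \<bullet> (N *\<^sub>v x)" using zBz[OF z] Bz xz by (simp add: u0_def)
  have ineq: "x \<bullet> (N *\<^sub>v x) \<le> u \<bullet> (M *\<^sub>v u)" if u: "u \<in> carrier_vec n" and Au: "transpose_mat A *\<^sub>v u = x" for u
  proof -
    have Mu: "M *\<^sub>v u \<in> carrier_vec n" using M u by simp
    have Mu0: "M *\<^sub>v u0 \<in> carrier_vec n" using M u0 by simp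
    have "(transpose_mat Z *\<^sub>v (M *\<^sub>v u)) \<bullet> z = (M *\<^sub>v u) \<bullet> (Z *\<^sub>v z)"
      by (rule transpose_vec_mult_scalar[OF Z z Mu])
    then have "x \<bullet> z = (M *\<^sub>v u) \<bullet> u0" using ATv[OF u] Au by (simp add: u0_def)
    then have c1: "u0 \<bullet> (M *\<^sub>v u) = z \<bullet> x"
      using comm_scalar_prod[OF Mu u0] comm_scalar_prod[OF x z] by simp
    have "(transpose_mat M *\<^sub>v u) \<bullet> u0 = u \<bullet> (M *\<^sub>v u0)"
      by (rule transpose_vec_mult_scalar[OF M u0 u])
    then have c2: "u \<bullet> (M *\<^sub>v u0) = z \<bullet> x"
      using sym c1 comm_scalar_prod[OF Mu u0] by simp
    define w where "w = u - u0"
    have w: "w \<in> carrier_vec n" using u u0 by (simp add: w_def)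
    have "0 \<le> w \<bullet> (M *\<^sub>v w)" using psd w by blast
    also have "M *\<^sub>v w = M *\<^sub>v u - M *\<^sub>v u0" unfolding w_def by (rule mult_minus_distrib_mat_vec[OF M u u0])
    also have "w \<bullet> (M *\<^sub>v u - M *\<^sub>v u0) = u \<bullet> (M *\<^sub>v u - M *\<^sub>v u0) - u0 \<bullet> (M *\<^sub>v u - M *\<^sub>v u0)"
      unfolding w_def by (rule minus_scalar_prod_distrib[OF u u0]) (use Mu Mu0 in simp)
    also have "\<dots> = (u \<bullet> (M *\<^sub>v u) - u \<bullet> (M *\<^sub>v u0)) - (u0 \<bullet> (M *\<^sub>v u) - u0 \<bullet> (M *\<^sub>v u0))"
      using scalar_prod_minus_distrib[OF u Mu Mu0] scalar_prod_minus_distrib[OF u0 Mu Mu0] by simp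
    finally show ?thesis using c1 c2 u0Mu0 xz by simp
  qed
  show ?thesis using u0 ATu0 u0Mu0 ineq by blast
  qed
  show "\<And>x. x \<in> carrier_vec s \<Longrightarrow> \<exists>u\<in>carrier_vec n. transpose_mat A *\<^sub>v u = x \<and> u \<bullet> (M *\<^sub>v u) = x \<bullet> (N *\<^sub>v x)"
    using main by blast
  show "\<And>x u. x \<in> carrier_vec s \<Longrightarrow> u \<in> carrier_vec n \<Longrightarrow> transpose_mat A *\<^sub>v u = x \<Longrightarrow> x \<bullet> (N *\<^sub>v x) \<le> u \<bullet> (M *\<^sub>v u)"
    using main by blast
qed
lemma quad_ineq:
  fixes xi :: "nat \<Rightarrow> nat \<Rightarrow> real" and lam p r :: "nat \<Rightarrow> real"
  assumes Lpos: "0 < (\<Sum>i<v1. \<Sum>k<d. xi i k * lam i)"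
    and La_def: "La = (\<Sum>i<v1. \<Sum>k<d. xi i k * lam i)"
    and w_def: "w = (\<lambda>i. \<Sum>k<d. xi i k)"
    and al_def: "al = (\<lambda>k. (\<Sum>i<v1. xi i k * lam i) / La)"
    and P_def: "P = (\<Sum>i<v1. lam i * w i * p i)"
    and R_def: "R = (\<Sum>k<d. (\<Sum>i<v1. xi i k * lam i) * r k)"
    and t_def: "t = (R - P) / (2 * La)"
  shows "(1/2) * (\<Sum>i<v1. \<Sum>k<d. xi i k * lam i * (p i + r k)^2)
       + (1/2) * (\<Sum>i<v1. \<Sum>k<d. xi i k * lam i * (p i + 2 * t - r k)^2)
       \<le> (\<Sum>i<v1. \<Sum>k<d. w i * al k * lam i * (p i + r k)^2)"
proof -
  define W where "W i = lam i * w i" for i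
  define V where "V k = (\<Sum>i<v1. xi i k * lam i)" for k
  have La: "La > 0" using Lpos by (simp add: La_def)
  have W_eq: "W i = (\<Sum>k<d. xi i k * lam i)" for i
    by (simp add: W_def w_def sum_distrib_left mult.commute)
  have sumW: "(\<Sum>i<v1. W i) = La" by (simp add: W_eq La_def)
  have sumV: "(\<Sum>k<d. V k) = La" unfolding V_def La_def by (rule sum.swap)
  have al_eq: "al k = V k / La" for k by (simp add: al_def V_def)
  have sumal: "(\<Sum>k<d. al k) = 1" using La sumV by (simp add: al_eq sum_divide_distrib[symmetric])
  have P_eq: "P = (\<Sum>i<v1. W i * p i)" by (simp add: P_def W_def)
  have R_eq: "R = (\<Sum>k<d. V k * r k)" by (simp add: R_def V_def)
  define X where "X = (\<Sum>i<v1. W i * (p i)^2)"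
  define Y where "Y = (\<Sum>k<d. V k * (r k)^2)"
  have pt: "(1/2) * (a + b)^2 + (1/2) * (a + 2 * t - b)^2 = (a + t)^2 + (b - t)^2" for a b :: real
    by (simp add: power2_eq_square algebra_simps)
  have "(1/2) * (\<Sum>i<v1. \<Sum>k<d. xi i k * lam i * (p i + r k)^2)
       + (1/2) * (\<Sum>i<v1. \<Sum>k<d. xi i k * lam i * (p i + 2 * t - r k)^2)
       = (\<Sum>i<v1. \<Sum>k<d. xi i k * lam i * ((1/2) * (p i + r k)^2 + (1/2) * (p i + 2 * t - r k)^2))"
    by (simp add: sum_distrib_left sum.distrib[symmetric] algebra_simps)
  also have "\<dots> = (\<Sum>i<v1. \<Sum>k<d. xi i k * lam i * ((p i + t)^2 + (r k - t)^2))"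
    by (simp only: pt)
  also have "\<dots> = (\<Sum>i<v1. \<Sum>k<d. xi i k * lam i * (p i + t)^2) + (\<Sum>i<v1. \<Sum>k<d. xi i k * lam i * (r k - t)^2)"
    by (simp add: distrib_left sum.distrib)
  also have "(\<Sum>i<v1. \<Sum>k<d. xi i k * lam i * (p i + t)^2) = (\<Sum>i<v1. W i * (p i + t)^2)"
    by (simp add: W_eq sum_distrib_right)
  also have "(\<Sum>i<v1. \<Sum>k<d. xi i k * lam i * (r k - t)^2) = (\<Sum>k<d. V k * (r k - t)^2)"
    by (subst sum.swap) (simp add: V_def sum_distrib_right)
  also have "(\<Sum>i<v1. W i * (p i + t)^2) = X + 2 * t * P + t^2 * La"
    by (simp add: X_def P_eq sumW[symmetric] power2_eq_square algebra_simps sum.distrib sum_distrib_left)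
  also have "(\<Sum>k<d. V k * (r k - t)^2) = Y - 2 * t * R + t^2 * La"
    by (simp add: Y_def R_eq sumV[symmetric] power2_eq_square algebra_simps sum.distrib sum_distrib_left sum_subtractf)
  finally have lhs: "(1/2) * (\<Sum>i<v1. \<Sum>k<d. xi i k * lam i * (p i + r k)^2)
       + (1/2) * (\<Sum>i<v1. \<Sum>k<d. xi i k * lam i * (p i + 2 * t - r k)^2)
       = X + 2 * t * P + t^2 * La + (Y - 2 * t * R + t^2 * La)" .
  define Ra where "Ra = (\<Sum>k<d. al k * r k)"
  define Qa where "Qa = (\<Sum>k<d. al k * (r k)^2)"
  have inner: "(\<Sum>k<d. al k * (p i + r k)^2) = (p i)^2 + 2 * p i * Ra + Qa" for i
  proof -
    have "(\<Sum>k<d. al k * (p i + r k)^2) = (\<Sum>k<d. al k * (p i)^2 + 2 * p i * (al k * r k) + al k * (r k)^2)"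
      by (intro sum.cong) (auto simp: power2_eq_square algebra_simps)
    also have "\<dots> = (\<Sum>k<d. al k) * (p i)^2 + 2 * p i * Ra + Qa"
      by (simp add: sum.distrib sum_distrib_left sum_distrib_right Ra_def Qa_def)
    finally show ?thesis using sumal by simp
  qed
  have "(\<Sum>i<v1. \<Sum>k<d. w i * al k * lam i * (p i + r k)^2) = (\<Sum>i<v1. W i * (\<Sum>k<d. al k * (p i + r k)^2))"
    by (simp add: W_def sum_distrib_left algebra_simps)
  also have "\<dots> = (\<Sum>i<v1. W i * ((p i)^2 + 2 * p i * Ra + Qa))" by (simp add: inner)
  also have "\<dots> = X + 2 * P * Ra + La * Qa"
    by (simp add: X_def P_eq sumW[symmetric] algebra_simps sum.distrib sum_distrib_left sum_distrib_right)
  finally have rhs: "(\<Sum>i<v1. \<Sum>k<d. w i * al k * lam i * (p i + r k)^2) = X + 2 * P * Ra + La * Qa" .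
  have Ra_eq: "Ra = R / La" by (simp add: Ra_def R_eq al_eq sum_divide_distrib)
  have Qa_eq: "La * Qa = Y" using La by (simp add: Qa_def Y_def al_eq sum_divide_distrib[symmetric])
  have key: "2 * t * P + t^2 * La + (- 2 * t * R + t^2 * La) + (P + R)^2 / (2 * La) = 2 * P * (R / La)"
    using La by (simp add: t_def field_simps power2_eq_square)
  have "(P + R)^2 / (2 * La) \<ge> 0" using La by simp
  moreover have "2 * P * Ra = 2 * P * (R / La)" by (simp add: Ra_eq)
  ultimately show ?thesis unfolding lhs rhs using key Qa_eq by linarith
qed
lemma sum_split3:
  fixes F :: "nat \<Rightarrow> real"
  shows "(\<Sum>a<v1 + 1 + v2. F a) = (\<Sum>a<v1. F a) + F v1 + (\<Sum>j<v2. F (v1 + 1 + j))"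
  by (induction v2) (simp_all add: ac_simps)

lemma sum_split2:
  fixes F :: "nat \<Rightarrow> real"
  shows "(\<Sum>b<s1 + s2. F b) = (\<Sum>b<s1. F b) + (\<Sum>j<s2. F (s1 + j))"
  by (induction s2) (simp_all add: ac_simps)

lemma fvec_dim[simp]: "dim_vec (fvec v1 g i k) = v1 + 1 + dim_vec (g k)"
  by (simp add: fvec_def)

lemma fvec_index:
  assumes "a < v1 + 1 + dim_vec (g k)"
  shows "fvec v1 g i k $ a = (if a < v1 then (if a = i then 1 else 0) else if a = v1 then 1 else g k $ (a - v1 - 1))"
  using assms by (auto simp: fvec_def unit_vec_def)

lemma fvec_dot:
  assumes i: "i < v1" and gk: "g k \<in> carrier_vec v2" and u: "u \<in> carrier_vec (v1 + 1 + v2)"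
  shows "fvec v1 g i k \<bullet> u = u $ i + u $ v1 + (\<Sum>j<v2. g k $ j * u $ (v1 + 1 + j))"
proof -
  have "fvec v1 g i k \<bullet> u = (\<Sum>a<v1 + 1 + v2. fvec v1 g i k $ a * u $ a)"
    using u by (simp add: scalar_prod_def atLeast0LessThan)
  also have "\<dots> = (\<Sum>a<v1. fvec v1 g i k $ a * u $ a) + fvec v1 g i k $ v1 * u $ v1
      + (\<Sum>j<v2. fvec v1 g i k $ (v1 + 1 + j) * u $ (v1 + 1 + j))"
    by (rule sum_split3)
  also have "(\<Sum>a<v1. fvec v1 g i k $ a * u $ a) = (\<Sum>a<v1. if a = i then u $ a else 0)"
    using gk by (intro sum.cong) (auto simp: fvec_index)
  also have "\<dots> = u $ i" using i by simp
  also have "fvec v1 g i k $ v1 * u $ v1 = u $ v1" using gk by (simp add: fvec_index)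
  also have "(\<Sum>j<v2. fvec v1 g i k $ (v1 + 1 + j) * u $ (v1 + 1 + j)) = (\<Sum>j<v2. g k $ j * u $ (v1 + 1 + j))"
    using gk by (intro sum.cong) (auto simp: fvec_index)
  finally show ?thesis .
qed

lemma mm_carrier: "moment_mat v1 v2 d lam g xi \<in> carrier_mat (v1 + 1 + v2) (v1 + 1 + v2)"
  by (simp add: moment_mat_def)

lemma mm_index:
  assumes "a < v1 + 1 + v2" "b < v1 + 1 + v2"
  shows "moment_mat v1 v2 d lam g xi $$ (a,b) =
     (\<Sum>i<v1. \<Sum>k<d. xi i k * lam i * (fvec v1 g i k $ a) * (fvec v1 g i k $ b))"
  using assms by (simp add: moment_mat_def)

lemma mm_sym: "transpose_mat (moment_mat v1 v2 d lam g xi) = moment_mat v1 v2 d lam g xi"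
  by (rule eq_matI) (auto simp: moment_mat_def ac_simps)

lemma mm_mult:
  assumes u: "u \<in> carrier_vec (v1 + 1 + v2)" and a: "a < v1 + 1 + v2"
  shows "(moment_mat v1 v2 d lam g xi *\<^sub>v u) $ a =
    (\<Sum>i<v1. \<Sum>k<d. xi i k * lam i * (fvec v1 g i k $ a) * (fvec v1 g i k \<bullet> u))"
proof -
  let ?n = "v1 + 1 + v2"
  have "(moment_mat v1 v2 d lam g xi *\<^sub>v u) $ a = (\<Sum>b<?n. moment_mat v1 v2 d lam g xi $$ (a,b) * u $ b)"
    by (rule mat_vec_index_sum[OF mm_carrier u a])
  also have "\<dots> = (\<Sum>b<?n. \<Sum>i<v1. \<Sum>k<d. xi i k * lam i * (fvec v1 g i k $ a) * (fvec v1 g i k $ b) * u $ b)"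
    using a by (intro sum.cong) (auto simp: mm_index sum_distrib_right)
  also have "\<dots> = (\<Sum>i<v1. \<Sum>k<d. \<Sum>b<?n. xi i k * lam i * (fvec v1 g i k $ a) * (fvec v1 g i k $ b) * u $ b)"
    by (simp only: sum.swap[of _ "{..<?n}" "{..<v1}"] sum.swap[of _ "{..<?n}" "{..<d}"])
  also have "\<dots> = (\<Sum>i<v1. \<Sum>k<d. xi i k * lam i * (fvec v1 g i k $ a) * (fvec v1 g i k \<bullet> u))"
  proof -
    have fd: "fvec v1 g i k \<bullet> u = (\<Sum>b<?n. fvec v1 g i k $ b * u $ b)" for i k
      using u by (simp add: scalar_prod_def atLeast0LessThan)
    show ?thesis by (simp only: fd sum_distrib_left mult.assoc)
  qed
  finally show ?thesis .
qed

lemma mm_quad: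
  assumes u: "u \<in> carrier_vec (v1 + 1 + v2)"
  shows "u \<bullet> (moment_mat v1 v2 d lam g xi *\<^sub>v u) =
    (\<Sum>i<v1. \<Sum>k<d. xi i k * lam i * (fvec v1 g i k \<bullet> u)^2)"
proof -
  let ?n = "v1 + 1 + v2"
  let ?M = "moment_mat v1 v2 d lam g xi"
  have "u \<bullet> (?M *\<^sub>v u) = (\<Sum>a<?n. u $ a * (?M *\<^sub>v u) $ a)"
    using mm_carrier[of v1 v2 d lam g xi] by (simp add: scalar_prod_def atLeast0LessThan)
  also have "\<dots> = (\<Sum>a<?n. \<Sum>i<v1. \<Sum>k<d. xi i k * lam i * (fvec v1 g i k \<bullet> u) * (fvec v1 g i k $ a * u $ a))"
    using u by (intro sum.cong) (auto simp: mm_mult sum_distrib_left ac_simps)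
  also have "\<dots> = (\<Sum>i<v1. \<Sum>k<d. \<Sum>a<?n. xi i k * lam i * (fvec v1 g i k \<bullet> u) * (fvec v1 g i k $ a * u $ a))"
    by (simp only: sum.swap[of _ "{..<?n}" "{..<v1}"] sum.swap[of _ "{..<?n}" "{..<d}"])
  also have "\<dots> = (\<Sum>i<v1. \<Sum>k<d. xi i k * lam i * (fvec v1 g i k \<bullet> u)^2)"
  proof (intro sum.cong refl)
    fix i k
    have fd: "(\<Sum>b<?n. fvec v1 g i k $ b * u $ b) = fvec v1 g i k \<bullet> u"
      using u by (simp add: scalar_prod_def atLeast0LessThan)
    have "(\<Sum>a<?n. xi i k * lam i * (fvec v1 g i k \<bullet> u) * (fvec v1 g i k $ a * u $ a))
       = xi i k * lam i * (fvec v1 g i k \<bullet> u) * (\<Sum>a<?n. fvec v1 g i k $ a * u $ a)"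
      by (simp only: sum_distrib_left)
    then show "(\<Sum>a<?n. xi i k * lam i * (fvec v1 g i k \<bullet> u) * (fvec v1 g i k $ a * u $ a))
       = xi i k * lam i * (fvec v1 g i k \<bullet> u)^2" by (simp only: fd power2_eq_square mult.assoc)
  qed
  finally show ?thesis .
qed

lemma mm_psd:
  assumes xi: "\<forall>i<v1. \<forall>k<d. xi i k \<ge> 0" and lam: "\<forall>i<v1. lam i > 0"
    and u: "u \<in> carrier_vec (v1 + 1 + v2)"
  shows "u \<bullet> (moment_mat v1 v2 d lam g xi *\<^sub>v u) \<ge> 0"
proof -
  have lam': "\<forall>i<v1. lam i \<ge> 0" using lam by (simp add: less_imp_le)
  show ?thesis
    unfolding mm_quad[OF u] using xi lam' by (intro sum_nonneg) (auto intro!: mult_nonneg_nonneg)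
qed

lemma mm_ker:
  assumes xi: "\<forall>i<v1. \<forall>k<d. xi i k \<ge> 0" and lam: "\<forall>i<v1. lam i > 0"
    and u: "u \<in> carrier_vec (v1 + 1 + v2)"
    and z: "u \<bullet> (moment_mat v1 v2 d lam g xi *\<^sub>v u) = 0"
  shows "moment_mat v1 v2 d lam g xi *\<^sub>v u = 0\<^sub>v (v1 + 1 + v2)"
proof -
  have lam': "\<forall>i<v1. lam i \<ge> 0" using lam by (simp add: less_imp_le)
  have nn: "\<forall>i\<in>{..<v1}. 0 \<le> (\<Sum>k<d. xi i k * lam i * (fvec v1 g i k \<bullet> u)^2)"
    using xi lam' by (auto intro!: sum_nonneg mult_nonneg_nonneg)
  have "(\<Sum>i<v1. \<Sum>k<d. xi i k * lam i * (fvec v1 g i k \<bullet> u)^2) = 0" using z mm_quad[OF u] by simp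
  then have "\<forall>i\<in>{..<v1}. (\<Sum>k<d. xi i k * lam i * (fvec v1 g i k \<bullet> u)^2) = 0"
    using sum_nonneg_eq_0_iff[of "{..<v1}" "\<lambda>i. \<Sum>k<d. xi i k * lam i * (fvec v1 g i k \<bullet> u)^2"] nn by auto
  then have all0: "xi i k * lam i * (fvec v1 g i k \<bullet> u)^2 = 0" if "i < v1" "k < d" for i k
    using that xi lam' sum_nonneg_eq_0_iff[of "{..<d}" "\<lambda>k. xi i k * lam i * (fvec v1 g i k \<bullet> u)^2"]
    by (auto intro!: mult_nonneg_nonneg)
  have each: "xi i k * lam i * (fvec v1 g i k \<bullet> u) = 0" if "i < v1" "k < d" for i k
  proof -
    have "(xi i k * lam i * (fvec v1 g i k \<bullet> u)) * (fvec v1 g i k \<bullet> u) = 0"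
      using all0[OF that] by (simp add: power2_eq_square ac_simps)
    then show ?thesis by auto
  qed
  show ?thesis
  proof (rule eq_vecI)
    fix a assume a: "a < dim_vec (0\<^sub>v (v1 + 1 + v2) :: real vec)"
    then have "(moment_mat v1 v2 d lam g xi *\<^sub>v u) $ a =
      (\<Sum>i<v1. \<Sum>k<d. fvec v1 g i k $ a * (xi i k * lam i * (fvec v1 g i k \<bullet> u)))"
      using mm_mult[OF u] by (simp add: ac_simps)
    also have "\<dots> = 0" by (intro sum.neutral ballI) (simp add: each)
    finally show "(moment_mat v1 v2 d lam g xi *\<^sub>v u) $ a = 0\<^sub>v (v1 + 1 + v2) $ a" using a by simp
  qed (simp add: moment_mat_def)
qed
definition Amat :: "real mat \<Rightarrow> real mat \<Rightarrow> nat \<Rightarrow> nat \<Rightarrow> nat \<Rightarrow> nat \<Rightarrow> real mat" where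
  "Amat Q1 K v1 v2 s1 s2 = four_block_mat Q1 (0\<^sub>m v1 s2) (0\<^sub>m (1 + v2) s1)
                      (four_block_mat (0\<^sub>m 1 s2) (0\<^sub>m 1 0) K (0\<^sub>m v2 0))"

lemma Amat_carrier:
  assumes "Q1 \<in> carrier_mat v1 s1" "K \<in> carrier_mat v2 s2"
  shows "Amat Q1 K v1 v2 s1 s2 \<in> carrier_mat (v1 + 1 + v2) (s1 + s2)"
  using assms by (intro carrier_matI) (auto simp: Amat_def)

lemma Amat_index:
  assumes Q1: "Q1 \<in> carrier_mat v1 s1" and K: "K \<in> carrier_mat v2 s2"
    and a: "a < v1 + 1 + v2" and b: "b < s1 + s2"
  shows "Amat Q1 K v1 v2 s1 s2 $$ (a,b) =
    (if a < v1 \<and> b < s1 then Q1 $$ (a,b) else if v1 < a \<and> s1 \<le> b then K $$ (a - v1 - 1, b - s1) else 0)"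
proof -
  have inner: "four_block_mat (0\<^sub>m 1 s2) (0\<^sub>m 1 0) K (0\<^sub>m v2 0) $$ (a', b') =
      (if a' < 1 then 0 else K $$ (a' - 1, b'))" if "a' < 1 + v2" "b' < s2" for a' b'
    using that K by (simp add: index_mat_four_block)
  have main: "Amat Q1 K v1 v2 s1 s2 $$ (a,b) = (if a < v1 then (if b < s1 then Q1 $$ (a,b) else 0)
     else (if b < s1 then 0 else (if a - v1 < 1 then 0 else K $$ (a - v1 - 1, b - s1))))"
    unfolding Amat_def using Q1 K a b by (simp add: index_mat_four_block(1) inner)
  show ?thesis unfolding main using a b by (cases "a < v1"; cases "b < s1") auto
qed

lemma Amat_rank:
  assumes Q1: "Q1 \<in> carrier_mat v1 s1" and K: "K \<in> carrier_mat v2 s2"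
    and rQ: "full_col_rank Q1" and rK: "full_col_rank K"
  shows "full_col_rank (Amat Q1 K v1 v2 s1 s2)"
  unfolding full_col_rank_def
proof (intro ballI impI)
  let ?A = "Amat Q1 K v1 v2 s1 s2"
  have A: "?A \<in> carrier_mat (v1 + 1 + v2) (s1 + s2)" by (rule Amat_carrier[OF Q1 K])
  fix x assume x': "x \<in> carrier_vec (dim_col ?A)" and Ax': "?A *\<^sub>v x = 0\<^sub>v (dim_row ?A)"
  have x: "x \<in> carrier_vec (s1 + s2)" using x' A by simp
  have Ax: "?A *\<^sub>v x = 0\<^sub>v (v1 + 1 + v2)" using Ax' A by simp
  define x1 where "x1 = vec s1 (\<lambda>b. x $ b)"
  define x2 where "x2 = vec s2 (\<lambda>b. x $ (s1 + b))"
  have x1: "x1 \<in> carrier_vec s1" and x2: "x2 \<in> carrier_vec s2" by (auto simp: x1_def x2_def)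
  have Axi: "(?A *\<^sub>v x) $ a = (\<Sum>b<s1. ?A $$ (a,b) * x $ b) + (\<Sum>j<s2. ?A $$ (a, s1 + j) * x $ (s1 + j))"
    if "a < v1 + 1 + v2" for a
    using mat_vec_index_sum[OF A x that] sum_split2 by simp
  have "Q1 *\<^sub>v x1 = 0\<^sub>v v1"
  proof (rule eq_vecI)
    fix a assume "a < dim_vec (0\<^sub>v v1 :: real vec)"
    then have a: "a < v1" by simp
    have "(Q1 *\<^sub>v x1) $ a = (\<Sum>b<s1. Q1 $$ (a,b) * x1 $ b)" by (rule mat_vec_index_sum[OF Q1 x1 a])
    also have "\<dots> = (\<Sum>b<s1. ?A $$ (a,b) * x $ b) + (\<Sum>j<s2. ?A $$ (a, s1 + j) * x $ (s1 + j))"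
      using a Q1 K by (simp add: Amat_index x1_def)
    also have "\<dots> = 0" using Axi[of a] a Ax by simp
    finally show "(Q1 *\<^sub>v x1) $ a = 0\<^sub>v v1 $ a" using a by simp
  qed (use Q1 in simp)
  then have x10: "x1 = 0\<^sub>v s1" using rQ x1 Q1 unfolding full_col_rank_def by auto
  have "K *\<^sub>v x2 = 0\<^sub>v v2"
  proof (rule eq_vecI)
    fix j assume "j < dim_vec (0\<^sub>v v2 :: real vec)"
    then have j: "j < v2" by simp
    have "(K *\<^sub>v x2) $ j = (\<Sum>b<s2. K $$ (j,b) * x2 $ b)" by (rule mat_vec_index_sum[OF K x2 j])
    also have "\<dots> = (\<Sum>b<s1. ?A $$ (v1 + 1 + j,b) * x $ b) + (\<Sum>b<s2. ?A $$ (v1 + 1 + j, s1 + b) * x $ (s1 + b))"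
      using j Q1 K by (simp add: Amat_index x2_def)
    also have "\<dots> = 0" using Axi[of "v1 + 1 + j"] j Ax by simp
    finally show "(K *\<^sub>v x2) $ j = 0\<^sub>v v2 $ j" using j by simp
  qed (use K in simp)
  then have x20: "x2 = 0\<^sub>v s2" using rK x2 K unfolding full_col_rank_def by auto
  show "x = 0\<^sub>v (dim_col ?A)"
  proof (rule eq_vecI)
    fix b assume "b < dim_vec (0\<^sub>v (dim_col ?A) :: real vec)"
    then have b: "b < s1 + s2" using A by simp
    show "x $ b = 0\<^sub>v (dim_col ?A) $ b"
    proof (cases "b < s1")
      case True
      then have "x $ b = x1 $ b" by (simp add: x1_def)
      then show ?thesis using x10 True b A by simp
    next
      case False
      have "s1 + (b - s1) = b" using False by simp
      then have "x $ b = x2 $ (b - s1)" using b False by (simp add: x2_def)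
      then show ?thesis using x20 False b A by simp
    qed
  qed (use x A in simp)
qed

definition Smat :: "nat \<Rightarrow> nat \<Rightarrow> real mat" where
  "Smat s1 s2 = mat (s1 + s2) (s1 + s2) (\<lambda>(a,b). if a = b then (if a < s1 then 1 else -1) else 0)"

lemma Smat_carrier: "Smat s1 s2 \<in> carrier_mat (s1 + s2) (s1 + s2)"
  by (simp add: Smat_def)

lemma Smat_sym: "transpose_mat (Smat s1 s2) = Smat s1 s2"
  by (rule eq_matI) (auto simp: Smat_def)

lemma Smat_vec:
  assumes y: "y \<in> carrier_vec (s1 + s2)" and b: "b < s1 + s2"
  shows "(Smat s1 s2 *\<^sub>v y) $ b = (if b < s1 then y $ b else - y $ b)"
proof -
  have "(Smat s1 s2 *\<^sub>v y) $ b = (\<Sum>c<s1 + s2. Smat s1 s2 $$ (b,c) * y $ c)"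
    by (rule mat_vec_index_sum[OF Smat_carrier y b])
  also have "\<dots> = (\<Sum>c<s1 + s2. if c = b then (if b < s1 then y $ b else - y $ b) else 0)"
    using b by (intro sum.cong) (auto simp: Smat_def)
  also have "\<dots> = (if b < s1 then y $ b else - y $ b)" using b by simp
  finally show ?thesis .
qed

lemma Smat_sq: "Smat s1 s2 * Smat s1 s2 = 1\<^sub>m (s1 + s2)"
proof (rule eq_matI)
  fix a b assume a: "a < dim_row (1\<^sub>m (s1 + s2) :: real mat)" and b: "b < dim_col (1\<^sub>m (s1 + s2) :: real mat)"
  have S: "Smat s1 s2 \<in> carrier_mat (s1 + s2) (s1 + s2)" by (rule Smat_carrier)
  have a': "a < s1 + s2" and b': "b < s1 + s2" using a b by auto
  have "(Smat s1 s2 * Smat s1 s2) $$ (a,b) = row (Smat s1 s2) a \<bullet> col (Smat s1 s2) b"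
    using a' b' S by simp
  also have "\<dots> = (Smat s1 s2 *\<^sub>v col (Smat s1 s2) b) $ a"
    using a' S by simp
  also have "\<dots> = (if a < s1 then col (Smat s1 s2) b $ a else - col (Smat s1 s2) b $ a)"
    by (rule Smat_vec[OF col_carrier[OF S] a'])
  also have "\<dots> = 1\<^sub>m (s1 + s2) $$ (a,b)" using a b by (auto simp: Smat_def)
  finally show "(Smat s1 s2 * Smat s1 s2) $$ (a,b) = 1\<^sub>m (s1 + s2) $$ (a,b)" .
qed (auto simp: Smat_def)

lemma Amat_flip:
  assumes Q1: "Q1 \<in> carrier_mat v1 s1" and K: "K \<in> carrier_mat v2 s2"
    and u: "u \<in> carrier_vec (v1 + 1 + v2)" and u2: "u2 \<in> carrier_vec (v1 + 1 + v2)"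
    and same: "\<And>a. a < v1 \<Longrightarrow> u2 $ a = u $ a"
    and neg: "\<And>a. v1 < a \<Longrightarrow> a < v1 + 1 + v2 \<Longrightarrow> u2 $ a = - u $ a"
  shows "transpose_mat (Amat Q1 K v1 v2 s1 s2) *\<^sub>v u2 = Smat s1 s2 *\<^sub>v (transpose_mat (Amat Q1 K v1 v2 s1 s2) *\<^sub>v u)"
proof -
  let ?A = "Amat Q1 K v1 v2 s1 s2"
  have A: "?A \<in> carrier_mat (v1 + 1 + v2) (s1 + s2)" by (rule Amat_carrier[OF Q1 K])
  have AT: "transpose_mat ?A \<in> carrier_mat (s1 + s2) (v1 + 1 + v2)" using A by simp
  have ATu: "transpose_mat ?A *\<^sub>v u \<in> carrier_vec (s1 + s2)" using AT u by simp
  have ATi: "(transpose_mat ?A *\<^sub>v w) $ b = (\<Sum>a<v1 + 1 + v2. ?A $$ (a,b) * w $ a)"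
    if "w \<in> carrier_vec (v1 + 1 + v2)" "b < s1 + s2" for w b
    using mat_vec_index_sum[OF AT that] that A by simp
  show ?thesis
  proof (rule eq_vecI)
    fix b assume "b < dim_vec (Smat s1 s2 *\<^sub>v (transpose_mat ?A *\<^sub>v u))"
    then have b: "b < s1 + s2" by (simp add: Smat_def)
    have "(Smat s1 s2 *\<^sub>v (transpose_mat ?A *\<^sub>v u)) $ b
       = (if b < s1 then (transpose_mat ?A *\<^sub>v u) $ b else - (transpose_mat ?A *\<^sub>v u) $ b)"
      by (rule Smat_vec[OF ATu b])
    also have "\<dots> = (\<Sum>a<v1 + 1 + v2. ?A $$ (a,b) * u2 $ a)"
    proof (cases "b < s1")
      case True
      have "(\<Sum>a<v1 + 1 + v2. ?A $$ (a,b) * u2 $ a) = (\<Sum>a<v1 + 1 + v2. ?A $$ (a,b) * u $ a)"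
        using True b Q1 K same by (intro sum.cong) (auto simp: Amat_index)
      then show ?thesis using True ATi[OF u b] by simp
    next
      case False
      have "(\<Sum>a<v1 + 1 + v2. ?A $$ (a,b) * u2 $ a) = (\<Sum>a<v1 + 1 + v2. - (?A $$ (a,b) * u $ a))"
        using False b Q1 K neg by (intro sum.cong) (auto simp: Amat_index)
      then show ?thesis using False ATi[OF u b] by (simp add: sum_negf)
    qed
    also have "\<dots> = (transpose_mat ?A *\<^sub>v u2) $ b" using ATi[OF u2 b] by simp
    finally show "(transpose_mat ?A *\<^sub>v u2) $ b = (Smat s1 s2 *\<^sub>v (transpose_mat ?A *\<^sub>v u)) $ b" by simp
  qed (use AT in \<open>simp add: Smat_def\<close>)
qed
lemma qf_sum:
  fixes C :: "real mat"
  assumes C: "C \<in> carrier_mat s s" and x: "x \<in> carrier_vec s"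
  shows "x \<bullet> (C *\<^sub>v x) = (\<Sum>a<s. \<Sum>b<s. x $ a * C $$ (a,b) * x $ b)"
proof -
  have "x \<bullet> (C *\<^sub>v x) = (\<Sum>a<s. x $ a * (C *\<^sub>v x) $ a)"
    using C by (simp add: scalar_prod_def atLeast0LessThan)
  also have "\<dots> = (\<Sum>a<s. x $ a * (\<Sum>b<s. C $$ (a,b) * x $ b))"
    by (intro sum.cong refl) (simp add: mat_vec_index_sum[OF C x])
  also have "\<dots> = (\<Sum>a<s. \<Sum>b<s. x $ a * C $$ (a,b) * x $ b)"
    by (simp add: sum_distrib_left mult.assoc)
  finally show ?thesis .
qed

lemma nnd_smult:
  assumes c: "(c::real) \<ge> 0" and C: "nnd s C"
  shows "nnd s (c \<cdot>\<^sub>m C)"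
proof -
  have Cc: "C \<in> carrier_mat s s" and CT: "transpose_mat C = C"
    and Cq: "\<forall>x\<in>carrier_vec s. x \<bullet> (C *\<^sub>v x) \<ge> 0" using C by (auto simp: nnd_def)
  have cC: "c \<cdot>\<^sub>m C \<in> carrier_mat s s" using Cc by simp
  have "transpose_mat (c \<cdot>\<^sub>m C) = c \<cdot>\<^sub>m C"
  proof (rule eq_matI)
    fix i j assume "i < dim_row (c \<cdot>\<^sub>m C)" "j < dim_col (c \<cdot>\<^sub>m C)"
    then have i: "i < s" and j: "j < s" using Cc by auto
    then show "transpose_mat (c \<cdot>\<^sub>m C) $$ (i, j) = (c \<cdot>\<^sub>m C) $$ (i, j)"
      using Cc sym_entry[OF CT Cc i j] by simp
  qed (use Cc in auto)
  moreover have "x \<bullet> ((c \<cdot>\<^sub>m C) *\<^sub>v x) \<ge> 0" if x: "x \<in> carrier_vec s" for x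
  proof -
    have "x \<bullet> ((c \<cdot>\<^sub>m C) *\<^sub>v x) = (\<Sum>a<s. \<Sum>b<s. x $ a * (c \<cdot>\<^sub>m C) $$ (a,b) * x $ b)"
      by (rule qf_sum[OF cC x])
    also have "\<dots> = c * (\<Sum>a<s. \<Sum>b<s. x $ a * C $$ (a,b) * x $ b)"
      using Cc by (simp add: sum_distrib_left ac_simps)
    also have "\<dots> = c * (x \<bullet> (C *\<^sub>v x))" using qf_sum[OF Cc x] by simp
    finally show ?thesis using c Cq x by simp
  qed
  ultimately show ?thesis using cC by (simp add: nnd_def)
qed

lemma nnd_add:
  assumes C: "nnd s C" and D: "nnd s D"
  shows "nnd s (C + D)"
proof -
  have Cc: "C \<in> carrier_mat s s" and CT: "transpose_mat C = C"
    and Cq: "\<forall>x\<in>carrier_vec s. x \<bullet> (C *\<^sub>v x) \<ge> 0" using C by (auto simp: nnd_def)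
  have Dc: "D \<in> carrier_mat s s" and DT: "transpose_mat D = D"
    and Dq: "\<forall>x\<in>carrier_vec s. x \<bullet> (D *\<^sub>v x) \<ge> 0" using D by (auto simp: nnd_def)
  have CD: "C + D \<in> carrier_mat s s" using Cc Dc by simp
  have "transpose_mat (C + D) = C + D" using transpose_add[OF Cc Dc] CT DT by simp
  moreover have "x \<bullet> ((C + D) *\<^sub>v x) \<ge> 0" if x: "x \<in> carrier_vec s" for x
  proof -
    have "x \<bullet> ((C + D) *\<^sub>v x) = x \<bullet> (C *\<^sub>v x) + x \<bullet> (D *\<^sub>v x)"
      using add_mult_distrib_mat_vec[OF Cc Dc x] scalar_prod_add_distrib[of x s "C *\<^sub>v x" "D *\<^sub>v x"] x Cc Dc
      by simp
    then show ?thesis using Cq Dq x by simp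
  qed
  ultimately show ?thesis using CD by (simp add: nnd_def)
qed

lemma phi_superadd:
  assumes Phi: "information_function s \<Phi>" and C: "nnd s C" and D: "nnd s D"
  shows "\<Phi> (C + D) \<ge> \<Phi> C + \<Phi> D"
proof -
  have Cc: "C \<in> carrier_mat s s" and Dc: "D \<in> carrier_mat s s" using C D by (auto simp: nnd_def)
  have hom: "\<And>C c. nnd s C \<Longrightarrow> c > 0 \<Longrightarrow> \<Phi> (c \<cdot>\<^sub>m C) = c * \<Phi> C"
    using Phi unfolding information_function_def by blast
  have conc: "\<And>C D t. nnd s C \<Longrightarrow> nnd s D \<Longrightarrow> 0 \<le> t \<Longrightarrow> t \<le> 1 \<Longrightarrow>
        \<Phi> ((1 - t) \<cdot>\<^sub>m C + t \<cdot>\<^sub>m D) \<ge> (1 - t) * \<Phi> C + t * \<Phi> D"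
    using Phi unfolding information_function_def by blast
  have C2: "nnd s (2 \<cdot>\<^sub>m C)" and D2: "nnd s (2 \<cdot>\<^sub>m D)" using nnd_smult C D by auto
  have eq: "C + D = (1 - 1/2) \<cdot>\<^sub>m (2 \<cdot>\<^sub>m C) + (1/2) \<cdot>\<^sub>m (2 \<cdot>\<^sub>m D)"
    by (rule eq_matI) (use Cc Dc in auto)
  have "\<Phi> (C + D) \<ge> (1 - 1/2) * \<Phi> (2 \<cdot>\<^sub>m C) + (1/2) * \<Phi> (2 \<cdot>\<^sub>m D)"
    unfolding eq by (rule conc[OF C2 D2]) auto
  then show ?thesis using hom[OF C, of 2] hom[OF D, of 2] by simp
qed

lemma phi_mono:
  assumes Phi: "information_function s \<Phi>" and C: "nnd s C" and D: "nnd s D"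
  shows "\<Phi> (C + D) \<ge> \<Phi> C"
proof -
  have "\<Phi> D \<ge> 0" using Phi D unfolding information_function_def by blast
  then show ?thesis using phi_superadd[OF Phi C D] by simp
qed

lemma phi_SNS:
  assumes Phi: "eigenvalue_based (s1 + s2) \<Phi>" and N: "nnd (s1 + s2) N"
    and SNS: "nnd (s1 + s2) (Smat s1 s2 * N * Smat s1 s2)"
  shows "\<Phi> (Smat s1 s2 * N * Smat s1 s2) = \<Phi> N"
proof -
  let ?S = "Smat s1 s2"
  have Nc: "N \<in> carrier_mat (s1 + s2) (s1 + s2)" using N by (simp add: nnd_def)
  have S: "?S \<in> carrier_mat (s1 + s2) (s1 + s2)" by (rule Smat_carrier)
  have "similar_mat_wit (?S * N * ?S) N ?S ?S"
    unfolding similar_mat_wit_def Let_def using S Nc Smat_sq[of s1 s2] by auto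
  then have "similar_mat (?S * N * ?S) N" unfolding similar_mat_def by blast
  then have "char_poly (?S * N * ?S) = char_poly N" by (rule char_poly_similar)
  then show ?thesis using Phi SNS N unfolding eigenvalue_based_def by metis
qed
lemma key_lemma:
  fixes xi :: "nat \<Rightarrow> nat \<Rightarrow> real" and lam :: "nat \<Rightarrow> real" and g :: "nat \<Rightarrow> real vec"
  assumes g_dim: "\<forall>k<d. g k \<in> carrier_vec v2"
    and Q1: "Q1 \<in> carrier_mat v1 s1" and K: "K \<in> carrier_mat v2 s2"
    and La_pos: "0 < (\<Sum>i<v1. \<Sum>k<d. xi i k * lam i)"
    and La_def: "La = (\<Sum>i<v1. \<Sum>k<d. xi i k * lam i)"
    and w_def: "w = (\<lambda>i. \<Sum>k<d. xi i k)"
    and al_def: "al = (\<lambda>k. (\<Sum>i<v1. xi i k * lam i) / La)"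
    and u: "u \<in> carrier_vec (v1 + 1 + v2)"
  shows "\<exists>u2\<in>carrier_vec (v1 + 1 + v2).
     transpose_mat (Amat Q1 K v1 v2 s1 s2) *\<^sub>v u2 = Smat s1 s2 *\<^sub>v (transpose_mat (Amat Q1 K v1 v2 s1 s2) *\<^sub>v u) \<and>
     (1/2) * (u \<bullet> (moment_mat v1 v2 d lam g xi *\<^sub>v u)) + (1/2) * (u2 \<bullet> (moment_mat v1 v2 d lam g xi *\<^sub>v u2))
       \<le> u \<bullet> (moment_mat v1 v2 d lam g (\<lambda>i k. w i * al k) *\<^sub>v u)"
proof -
  let ?n = "v1 + 1 + v2"
  define p where "p i = u $ i + u $ v1" for i
  define r where "r k = (\<Sum>j<v2. g k $ j * u $ (v1 + 1 + j))" for k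
  define P where "P = (\<Sum>i<v1. lam i * w i * p i)"
  define R where "R = (\<Sum>k<d. (\<Sum>i<v1. xi i k * lam i) * r k)"
  define t where "t = (R - P) / (2 * La)"
  define u2 where "u2 = vec ?n (\<lambda>a. if a < v1 then u $ a else if a = v1 then u $ v1 + 2 * t else - u $ a)"
  have u2: "u2 \<in> carrier_vec ?n" by (simp add: u2_def)
  have fu: "fvec v1 g i k \<bullet> u = p i + r k" if "i < v1" "k < d" for i k
    using fvec_dot[OF that(1) _ u, of g k] g_dim that by (simp add: p_def r_def)
  have fu2: "fvec v1 g i k \<bullet> u2 = p i + 2 * t - r k" if "i < v1" "k < d" for i k
  proof -
    have "fvec v1 g i k \<bullet> u2 = u2 $ i + u2 $ v1 + (\<Sum>j<v2. g k $ j * u2 $ (v1 + 1 + j))"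
      using fvec_dot[OF that(1) _ u2, of g k] g_dim that by simp
    also have "(\<Sum>j<v2. g k $ j * u2 $ (v1 + 1 + j)) = - r k"
      by (simp add: u2_def r_def sum_negf[symmetric])
    finally show ?thesis using that by (simp add: u2_def p_def)
  qed
  have q1: "u \<bullet> (moment_mat v1 v2 d lam g xi *\<^sub>v u) = (\<Sum>i<v1. \<Sum>k<d. xi i k * lam i * (p i + r k)^2)"
    unfolding mm_quad[OF u] by (intro sum.cong refl) (simp add: fu)
  have q2: "u2 \<bullet> (moment_mat v1 v2 d lam g xi *\<^sub>v u2) = (\<Sum>i<v1. \<Sum>k<d. xi i k * lam i * (p i + 2 * t - r k)^2)"
    unfolding mm_quad[OF u2] by (intro sum.cong refl) (simp add: fu2)
  have q3: "u \<bullet> (moment_mat v1 v2 d lam g (\<lambda>i k. w i * al k) *\<^sub>v u) = (\<Sum>i<v1. \<Sum>k<d. w i * al k * lam i * (p i + r k)^2)"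
    unfolding mm_quad[OF u] by (intro sum.cong refl) (simp add: fu)
  have ineq: "(1/2) * (\<Sum>i<v1. \<Sum>k<d. xi i k * lam i * (p i + r k)^2)
       + (1/2) * (\<Sum>i<v1. \<Sum>k<d. xi i k * lam i * (p i + 2 * t - r k)^2)
       \<le> (\<Sum>i<v1. \<Sum>k<d. w i * al k * lam i * (p i + r k)^2)"
    by (rule quad_ineq[OF La_pos La_def w_def al_def P_def R_def t_def])
  have flip: "transpose_mat (Amat Q1 K v1 v2 s1 s2) *\<^sub>v u2 = Smat s1 s2 *\<^sub>v (transpose_mat (Amat Q1 K v1 v2 s1 s2) *\<^sub>v u)"
    by (rule Amat_flip[OF Q1 K u u2]) (auto simp: u2_def)
  show ?thesis using u2 flip ineq q1 q2 q3 by auto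
qed

theorem theorem1:
  fixes v1 v2 d s1 s2 :: nat
    and lam :: "nat \<Rightarrow> real" and g :: "nat \<Rightarrow> real vec"
    and Q1 K :: "real mat" and \<Phi> :: "real mat \<Rightarrow> real"
  assumes lam_pos: "\<forall>i<v1. lam i > 0"
    and g_dim: "\<forall>k<d. g k \<in> carrier_vec v2"
    and Q1_dim: "Q1 \<in> carrier_mat v1 s1"
    and Q1_rank: "full_col_rank Q1"
    and Q1_contrast: "transpose_mat Q1 *\<^sub>v vec v1 (\<lambda>_. 1) = 0\<^sub>v s1"
    and Q1_nozero: "\<forall>i<v1. \<exists>j<s1. Q1 $$ (i, j) \<noteq> 0"
    and K_dim: "K \<in> carrier_mat v2 s2"
    and K_rank: "full_col_rank K"
    and Phi_info: "information_function (s1 + s2) \<Phi>"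
    and Phi_eig: "eigenvalue_based (s1 + s2) \<Phi>"
    and ex_opt: "\<exists>\<xi>. phi_optimal \<Phi> v1 v2 d lam g
                   (four_block_mat Q1 (0\<^sub>m v1 s2) (0\<^sub>m (1 + v2) s1)
                      (four_block_mat (0\<^sub>m 1 s2) (0\<^sub>m 1 0) K (0\<^sub>m v2 0))) \<xi>"
  shows "\<exists>w \<alpha>. prob_vec v1 w \<and> prob_vec d \<alpha> \<and>
           phi_optimal \<Phi> v1 v2 d lam g
             (four_block_mat Q1 (0\<^sub>m v1 s2) (0\<^sub>m (1 + v2) s1)
                (four_block_mat (0\<^sub>m 1 s2) (0\<^sub>m 1 0) K (0\<^sub>m v2 0)))
             (\<lambda>i k. w i * \<alpha> k)"
proof -
  have Aeq: "four_block_mat Q1 (0\<^sub>m v1 s2) (0\<^sub>m (1 + v2) s1)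
                      (four_block_mat (0\<^sub>m 1 s2) (0\<^sub>m 1 0) K (0\<^sub>m v2 0)) = Amat Q1 K v1 v2 s1 s2"
    by (simp add: Amat_def)
  define A where "A = Amat Q1 K v1 v2 s1 s2"
  have A: "A \<in> carrier_mat (v1 + 1 + v2) (s1 + s2)" using Amat_carrier[OF Q1_dim K_dim] by (simp add: A_def)
  have Ark: "full_col_rank A" using Amat_rank[OF Q1_dim K_dim Q1_rank K_rank] by (simp add: A_def)
  from ex_opt obtain xi where opt: "phi_optimal \<Phi> v1 v2 d lam g A xi" unfolding Aeq A_def[symmetric] by blast
  have feas: "feasible v1 v2 d lam g A xi"
    and optle: "\<And>\<eta>. feasible v1 v2 d lam g A \<eta> \<Longrightarrow>
        \<Phi> (info_mat v1 v2 d lam g A \<eta>) \<le> \<Phi> (info_mat v1 v2 d lam g A xi)"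
    using opt unfolding phi_optimal_def by auto
  have xi_nn: "\<forall>i<v1. \<forall>k<d. xi i k \<ge> 0" and xi_sum: "(\<Sum>i<v1. \<Sum>k<d. xi i k) = 1"
    and csx: "colspace_sub A (moment_mat v1 v2 d lam g xi)"
    using feas unfolding feasible_def is_design_def by auto
  have lam_nn: "\<forall>i<v1. lam i \<ge> 0" using lam_pos by (simp add: less_imp_le)
  define La where "La = (\<Sum>i<v1. \<Sum>k<d. xi i k * lam i)"
  have La_nn: "La \<ge> 0" unfolding La_def using xi_nn lam_nn by (auto intro!: sum_nonneg mult_nonneg_nonneg)
  have La_pos: "La > 0"
  proof (rule ccontr)
    assume "\<not> La > 0"
    then have L0: "La = 0" using La_nn by simp
    have nn1: "\<forall>i\<in>{..<v1}. 0 \<le> (\<Sum>k<d. xi i k * lam i)"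
      using xi_nn lam_nn by (auto intro!: sum_nonneg mult_nonneg_nonneg)
    have "\<forall>i\<in>{..<v1}. (\<Sum>k<d. xi i k * lam i) = 0"
      using L0 sum_nonneg_eq_0_iff[of "{..<v1}" "\<lambda>i. \<Sum>k<d. xi i k * lam i"] nn1 by (simp add: La_def)
    then have "xi i k * lam i = 0" if "i < v1" "k < d" for i k
      using that xi_nn lam_nn sum_nonneg_eq_0_iff[of "{..<d}" "\<lambda>k. xi i k * lam i"]
      by (auto intro!: mult_nonneg_nonneg)
    then have "xi i k = 0" if "i < v1" "k < d" for i k using that lam_pos by fastforce
    then have "(\<Sum>i<v1. \<Sum>k<d. xi i k) = 0" by simp
    then show False using xi_sum by simp
  qed
  define w where "w = (\<lambda>i. \<Sum>k<d. xi i k)"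
  define al where "al = (\<lambda>k. (\<Sum>i<v1. xi i k * lam i) / La)"
  define eta where "eta = (\<lambda>i k. w i * al k)"
  have w_nn: "\<forall>i<v1. w i \<ge> 0" using xi_nn by (auto simp: w_def intro!: sum_nonneg)
  have al_nn: "\<forall>k<d. al k \<ge> 0" using xi_nn lam_nn La_pos
    by (auto simp: al_def intro!: divide_nonneg_pos sum_nonneg mult_nonneg_nonneg)
  have pw: "prob_vec v1 w" using w_nn xi_sum by (simp add: prob_vec_def w_def)
  have sum_al: "(\<Sum>k<d. al k) = 1"
  proof -
    have "(\<Sum>k<d. al k) = (\<Sum>k<d. \<Sum>i<v1. xi i k * lam i) / La" by (simp add: al_def sum_divide_distrib)
    also have "(\<Sum>k<d. \<Sum>i<v1. xi i k * lam i) = La" unfolding La_def by (rule sum.swap)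
    finally show ?thesis using La_pos by simp
  qed
  have pal: "prob_vec d al" using al_nn sum_al by (simp add: prob_vec_def)
  have eta_nn: "\<forall>i<v1. \<forall>k<d. eta i k \<ge> 0" using w_nn al_nn by (simp add: eta_def)
  have eta_sum: "(\<Sum>i<v1. \<Sum>k<d. eta i k) = 1"
    using pw sum_al by (simp add: eta_def sum_distrib_left[symmetric] prob_vec_def)
  let ?Mx = "moment_mat v1 v2 d lam g xi"
  let ?Me = "moment_mat v1 v2 d lam g eta"
  have Mx: "?Mx \<in> carrier_mat (v1 + 1 + v2) (v1 + 1 + v2)" by (rule mm_carrier)
  have Me: "?Me \<in> carrier_mat (v1 + 1 + v2) (v1 + 1 + v2)" by (rule mm_carrier)
  have Mx_sym: "transpose_mat ?Mx = ?Mx" and Me_sym: "transpose_mat ?Me = ?Me" by (rule mm_sym)+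
  have Mx_psd: "\<forall>u\<in>carrier_vec (v1 + 1 + v2). u \<bullet> (?Mx *\<^sub>v u) \<ge> 0"
    using mm_psd[OF xi_nn lam_pos] by blast
  have Me_psd: "\<forall>u\<in>carrier_vec (v1 + 1 + v2). u \<bullet> (?Me *\<^sub>v u) \<ge> 0"
    using mm_psd[OF eta_nn lam_pos] by blast
  have Mx_ker: "\<forall>u\<in>carrier_vec (v1 + 1 + v2). u \<bullet> (?Mx *\<^sub>v u) = 0 \<longrightarrow> ?Mx *\<^sub>v u = 0\<^sub>v (v1 + 1 + v2)"
    using mm_ker[OF xi_nn lam_pos] by blast
  have Me_ker: "\<forall>u\<in>carrier_vec (v1 + 1 + v2). u \<bullet> (?Me *\<^sub>v u) = 0 \<longrightarrow> ?Me *\<^sub>v u = 0\<^sub>v (v1 + 1 + v2)"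
    using mm_ker[OF eta_nn lam_pos] by blast
  have key: "\<exists>u2\<in>carrier_vec (v1 + 1 + v2).
     transpose_mat A *\<^sub>v u2 = Smat s1 s2 *\<^sub>v (transpose_mat A *\<^sub>v u) \<and>
     (1/2) * (u \<bullet> (?Mx *\<^sub>v u)) + (1/2) * (u2 \<bullet> (?Mx *\<^sub>v u2)) \<le> u \<bullet> (?Me *\<^sub>v u)"
    if u: "u \<in> carrier_vec (v1 + 1 + v2)" for u
    using key_lemma[OF g_dim Q1_dim K_dim _ La_def w_def al_def u] La_pos La_def
    by (simp add: A_def eta_def)
  have cse: "colspace_sub A ?Me"
    unfolding colspace_sub_def
  proof (intro ballI)
    fix x :: "real vec" assume x': "x \<in> carrier_vec (dim_col A)"
    then have x: "x \<in> carrier_vec (s1 + s2)" using A by simp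
    have v: "A *\<^sub>v x \<in> carrier_vec (v1 + 1 + v2)" using A x by simp
    have "\<exists>y\<in>carrier_vec (v1 + 1 + v2). ?Me *\<^sub>v y = A *\<^sub>v x"
    proof (rule range_lemma[OF Me Me_sym v], intro ballI impI)
      fix z :: "real vec" assume z: "z \<in> carrier_vec (v1 + 1 + v2)" and Mez: "?Me *\<^sub>v z = 0\<^sub>v (v1 + 1 + v2)"
      have qe: "z \<bullet> (?Me *\<^sub>v z) = 0" using Mez z by simp
      obtain u2 where u2: "u2 \<in> carrier_vec (v1 + 1 + v2)"
        and ineq: "(1/2) * (z \<bullet> (?Mx *\<^sub>v z)) + (1/2) * (u2 \<bullet> (?Mx *\<^sub>v u2)) \<le> z \<bullet> (?Me *\<^sub>v z)"
        using key[OF z] by blast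
      have "z \<bullet> (?Mx *\<^sub>v z) \<ge> 0" "u2 \<bullet> (?Mx *\<^sub>v u2) \<ge> 0" using Mx_psd z u2 by auto
      then have "z \<bullet> (?Mx *\<^sub>v z) = 0" using ineq qe by linarith
      then have Mxz: "?Mx *\<^sub>v z = 0\<^sub>v (v1 + 1 + v2)" using Mx_ker z by blast
      obtain y where y: "y \<in> carrier_vec (v1 + 1 + v2)" and Axy: "A *\<^sub>v x = ?Mx *\<^sub>v y"
        using csx x' Mx unfolding colspace_sub_def by auto
      have "(transpose_mat ?Mx *\<^sub>v y) \<bullet> z = y \<bullet> (?Mx *\<^sub>v z)"
        by (rule transpose_vec_mult_scalar[OF Mx z y])
      then show "(A *\<^sub>v x) \<bullet> z = 0" using Axy Mx_sym Mxz y by simp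
    qed
    then obtain y where y: "y \<in> carrier_vec (v1 + 1 + v2)" "?Me *\<^sub>v y = A *\<^sub>v x" by blast
    show "\<exists>y\<in>carrier_vec (dim_col ?Me). A *\<^sub>v x = ?Me *\<^sub>v y"
      using y Me by (intro bexI[of _ y]) auto
  qed
  have feas_eta: "feasible v1 v2 d lam g A eta"
    unfolding feasible_def is_design_def using eta_nn eta_sum cse by auto
  define Nx where "Nx = info_mat v1 v2 d lam g A xi"
  define Ne where "Ne = info_mat v1 v2 d lam g A eta"
  note IFx = info_facts[OF Mx Mx_sym Mx_psd Mx_ker A Ark csx]
  note IFe = info_facts[OF Me Me_sym Me_psd Me_ker A Ark cse]
  have Nx_def': "Nx = minv (transpose_mat A * ginv ?Mx * A)" by (simp add: Nx_def info_mat_def)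
  have Ne_def': "Ne = minv (transpose_mat A * ginv ?Me * A)" by (simp add: Ne_def info_mat_def)
  have Nx: "Nx \<in> carrier_mat (s1 + s2) (s1 + s2)" and Nx_sym: "transpose_mat Nx = Nx"
    using IFx(1,2) by (simp_all add: Nx_def')
  have Ne: "Ne \<in> carrier_mat (s1 + s2) (s1 + s2)" and Ne_sym: "transpose_mat Ne = Ne"
    using IFe(1,2) by (simp_all add: Ne_def')
  have nnd_Nx: "nnd (s1 + s2) Nx"
    unfolding nnd_def
  proof (intro conjI Nx Nx_sym ballI)
    fix x :: "real vec" assume x: "x \<in> carrier_vec (s1 + s2)"
    obtain u where "u \<in> carrier_vec (v1 + 1 + v2)" "u \<bullet> (?Mx *\<^sub>v u) = x \<bullet> (Nx *\<^sub>v x)"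
      using IFx(3)[OF x] by (auto simp: Nx_def')
    then show "0 \<le> x \<bullet> (Nx *\<^sub>v x)" using Mx_psd by auto
  qed
  let ?S = "Smat s1 s2"
  have S: "?S \<in> carrier_mat (s1 + s2) (s1 + s2)" by (rule Smat_carrier)
  have main_ineq: "(1/2) * (x \<bullet> (Nx *\<^sub>v x)) + (1/2) * ((?S *\<^sub>v x) \<bullet> (Nx *\<^sub>v (?S *\<^sub>v x))) \<le> x \<bullet> (Ne *\<^sub>v x)"
    if x: "x \<in> carrier_vec (s1 + s2)" for x
  proof -
    obtain u0 where u0: "u0 \<in> carrier_vec (v1 + 1 + v2)" and Au0: "transpose_mat A *\<^sub>v u0 = x"
      and qu0: "u0 \<bullet> (?Me *\<^sub>v u0) = x \<bullet> (Ne *\<^sub>v x)"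
      using IFe(3)[OF x] by (auto simp: Ne_def')
    obtain u2 where u2: "u2 \<in> carrier_vec (v1 + 1 + v2)"
      and Au2: "transpose_mat A *\<^sub>v u2 = ?S *\<^sub>v (transpose_mat A *\<^sub>v u0)"
      and ineq: "(1/2) * (u0 \<bullet> (?Mx *\<^sub>v u0)) + (1/2) * (u2 \<bullet> (?Mx *\<^sub>v u2)) \<le> u0 \<bullet> (?Me *\<^sub>v u0)"
      using key[OF u0] by blast
    have Sx: "?S *\<^sub>v x \<in> carrier_vec (s1 + s2)" using S x by simp
    have "x \<bullet> (Nx *\<^sub>v x) \<le> u0 \<bullet> (?Mx *\<^sub>v u0)" using IFx(4)[OF x u0 Au0] by (simp add: Nx_def')
    moreover have "(?S *\<^sub>v x) \<bullet> (Nx *\<^sub>v (?S *\<^sub>v x)) \<le> u2 \<bullet> (?Mx *\<^sub>v u2)"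
      using IFx(4)[OF Sx u2] Au2 Au0 by (simp add: Nx_def')
    ultimately show ?thesis using ineq qu0 by linarith
  qed
  define SNS where "SNS = ?S * Nx * ?S"
  have SNSc: "SNS \<in> carrier_mat (s1 + s2) (s1 + s2)" using S Nx by (simp add: SNS_def)
  have SNS_q: "x \<bullet> (SNS *\<^sub>v x) = (?S *\<^sub>v x) \<bullet> (Nx *\<^sub>v (?S *\<^sub>v x))" if x: "x \<in> carrier_vec (s1 + s2)" for x
  proof -
    have Sx: "?S *\<^sub>v x \<in> carrier_vec (s1 + s2)" using S x by simp
    have NSx: "Nx *\<^sub>v (?S *\<^sub>v x) \<in> carrier_vec (s1 + s2)" using Nx Sx by simp
    have SN: "?S * Nx \<in> carrier_mat (s1 + s2) (s1 + s2)" using S Nx by simp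
    have "SNS *\<^sub>v x = ?S *\<^sub>v (Nx *\<^sub>v (?S *\<^sub>v x))"
      unfolding SNS_def using assoc_mult_mat_vec[OF SN S x] assoc_mult_mat_vec[OF S Nx Sx] by simp
    moreover have "(transpose_mat ?S *\<^sub>v x) \<bullet> (Nx *\<^sub>v (?S *\<^sub>v x)) = x \<bullet> (?S *\<^sub>v (Nx *\<^sub>v (?S *\<^sub>v x)))"
      by (rule transpose_vec_mult_scalar[OF S NSx x])
    ultimately show ?thesis using Smat_sym by simp
  qed
  have SNS_sym: "transpose_mat SNS = SNS"
  proof -
    have SN: "?S * Nx \<in> carrier_mat (s1 + s2) (s1 + s2)" using S Nx by simp
    have "transpose_mat SNS = transpose_mat ?S * transpose_mat (?S * Nx)"
      unfolding SNS_def by (rule transpose_mult[OF SN S])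
    also have "transpose_mat (?S * Nx) = transpose_mat Nx * transpose_mat ?S" by (rule transpose_mult[OF S Nx])
    finally have "transpose_mat SNS = ?S * (Nx * ?S)" using Nx_sym Smat_sym by simp
    then show ?thesis unfolding SNS_def using assoc_mult_mat[OF S Nx S] by simp
  qed
  have nnd_SNS: "nnd (s1 + s2) SNS"
    unfolding nnd_def
  proof (intro conjI SNSc SNS_sym ballI)
    fix x :: "real vec" assume x: "x \<in> carrier_vec (s1 + s2)"
    have Sx: "?S *\<^sub>v x \<in> carrier_vec (s1 + s2)" using S x by simp
    show "0 \<le> x \<bullet> (SNS *\<^sub>v x)" using SNS_q[OF x] nnd_Nx Sx unfolding nnd_def by auto
  qed
  define C where "C = (1 - 1/2) \<cdot>\<^sub>m Nx + (1/2) \<cdot>\<^sub>m SNS"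
  have nnd_C: "nnd (s1 + s2) C" unfolding C_def
    by (intro nnd_add nnd_smult nnd_Nx nnd_SNS) auto
  have Cc: "C \<in> carrier_mat (s1 + s2) (s1 + s2)" and C_sym: "transpose_mat C = C"
    using nnd_C by (auto simp: nnd_def)
  define D where "D = Ne - C"
  have Dc: "D \<in> carrier_mat (s1 + s2) (s1 + s2)" unfolding D_def by (rule minus_carrier_mat[OF Cc])
  have nnd_D: "nnd (s1 + s2) D"
    unfolding nnd_def
  proof (intro conjI Dc ballI)
    show "transpose_mat D = D" unfolding D_def using transpose_minus[OF Ne Cc] Ne_sym C_sym by simp
    fix x :: "real vec" assume x: "x \<in> carrier_vec (s1 + s2)"
    let ?s = "s1 + s2"
    have "x \<bullet> (D *\<^sub>v x) = (\<Sum>a<?s. \<Sum>b<?s. x $ a * D $$ (a,b) * x $ b)" by (rule qf_sum[OF Dc x])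
    also have "\<dots> = (\<Sum>a<?s. \<Sum>b<?s. x $ a * Ne $$ (a,b) * x $ b)
        - (1/2) * (\<Sum>a<?s. \<Sum>b<?s. x $ a * Nx $$ (a,b) * x $ b)
        - (1/2) * (\<Sum>a<?s. \<Sum>b<?s. x $ a * SNS $$ (a,b) * x $ b)"
      using Ne Nx SNSc
      by (simp add: D_def C_def sum_subtractf sum.distrib sum_distrib_left algebra_simps)
    also have "\<dots> = x \<bullet> (Ne *\<^sub>v x) - (1/2) * (x \<bullet> (Nx *\<^sub>v x)) - (1/2) * (x \<bullet> (SNS *\<^sub>v x))"
      using qf_sum[OF Ne x] qf_sum[OF Nx x] qf_sum[OF SNSc x] by simp
    finally show "0 \<le> x \<bullet> (D *\<^sub>v x)" using main_ineq[OF x] SNS_q[OF x] by simp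
  qed
  have NeCD: "Ne = C + D"
    by (rule eq_matI) (use Ne Cc in \<open>auto simp: D_def\<close>)
  have "\<Phi> Ne \<ge> \<Phi> C" unfolding NeCD by (rule phi_mono[OF Phi_info nnd_C nnd_D])
  moreover have "\<Phi> C \<ge> (1 - 1/2) * \<Phi> Nx + (1/2) * \<Phi> SNS"
  proof -
    have conc: "\<And>C D t. nnd (s1 + s2) C \<Longrightarrow> nnd (s1 + s2) D \<Longrightarrow> 0 \<le> t \<Longrightarrow> t \<le> 1 \<Longrightarrow>
        \<Phi> ((1 - t) \<cdot>\<^sub>m C + t \<cdot>\<^sub>m D) \<ge> (1 - t) * \<Phi> C + t * \<Phi> D"
      using Phi_info unfolding information_function_def by blast
    show ?thesis unfolding C_def by (rule conc[OF nnd_Nx nnd_SNS]) auto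
  qed
  moreover have "\<Phi> SNS = \<Phi> Nx" unfolding SNS_def
    by (rule phi_SNS[OF Phi_eig nnd_Nx]) (use nnd_SNS in \<open>simp add: SNS_def\<close>)
  ultimately have PhiNe: "\<Phi> Ne \<ge> \<Phi> Nx" by simp
  have "phi_optimal \<Phi> v1 v2 d lam g A eta"
    unfolding phi_optimal_def
  proof (intro conjI feas_eta allI impI)
    fix \<zeta> assume "feasible v1 v2 d lam g A \<zeta>"
    then have "\<Phi> (info_mat v1 v2 d lam g A \<zeta>) \<le> \<Phi> Nx" using optle by (simp add: Nx_def)
    then show "\<Phi> (info_mat v1 v2 d lam g A \<zeta>) \<le> \<Phi> (info_mat v1 v2 d lam g A eta)"
      using PhiNe by (simp add: Ne_def)
  qed
  then show ?thesis unfolding Aeq A_def[symmetric] using pw pal by (auto simp: eta_def)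
qed

end
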